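(* The function \[ F_0(k,a,b,c,d,e,f) = (-1)^{f}(f+2k)\,\frac{\Gamma(a+k)\Gamma(b+k)\Gamma(c+k)\Gamma(d+k)\Gamma(e+k)\Gamma(3f-a-b-c-d-e+1+k)}{\Gamma(f-a+1+k)\Gamma(f-b+1+k)\Gamma(f-c+1+k)\Gamma(f-d+1+k)\Gamma(f-e+1+k)\Gamma(a+b+c+d+e-2f+k)} \] \[ \times\frac{\Gamma(a+b+c+d-2f)\Gamma(a+b+c+e-2f)\Gamma(a+b+d+e-2f)\Gamma(a+c+d+e-2f)\Gamma(b+c+d+e-2f)}{\Gamma(a+b-f)\Gamma(a+c-f)\Gamma(a+d-f)\Gamma(a+e-f)\Gamma(b+c-f)\Gamma(b+d-f)\Gamma(b+e-f)\Gamma(c+d-f)\Gamma(c+e-f)\Gamma(d+e-f)} \] is a WZ seed in the variables $a,b,c,d,e,f$.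
   Context: A term $F(n_1,\dots,n_r)$ is hypergeometric in $n_1,\dots,n_r$ if each ratio $F(\dots,n_i+1,\dots)/F(\dots,n_i,\dots)$ is a rational function of $n_1,\dots,n_r$. Write $\Delta_n f(n)=f(n+1)-f(n)$. Two hypergeometric terms $F(n,k),G(n,k)$ form a WZ pair, and $G$ is called a WZ mate of $F$, if $\Delta_n F(n,k)=\Delta_k G(n,k)$. A hypergeometric term $F_0(k,a,b,\dots)$ (hypergeometric in $k,a,b,\dots$) is a WZ seed in the variables $a,b,\dots$ if for all integers $K,A,B,\dots$ and all complex $k_0$ and all values of the parameters $a,b,\dots$, the term $F(n,k)=F_0(Kn+k_0+k,\,An+a,\,Bn+b,\dots)$ has a WZ mate $G(n,k)$ (a hypergeometric term). Factors such as $(-1)^x$ or $z^x$ with non-integer exponent $x$ are understood as hypergeometric factors satisfying $(-1)^{x+1}=-(-1)^x$, $z^{x+1}=z\cdot z^x$ (e.g. defined via a fixed branch of the exponential). *)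

theory Defs
  imports "HOL-Analysis.Analysis"
begin

text \<open>Fixed branch: (-1)^x := exp(i pi x), so that (-1)^(x+1) = -(-1)^x.\<close>
definition neg_one_pow :: "complex \<Rightarrow> complex" where
  "neg_one_pow x = exp (\<i> * of_real pi * x)"

definition mpoly_fun :: "nat \<Rightarrow> (complex list \<Rightarrow> complex) \<Rightarrow> bool" where
  "mpoly_fun r P \<longleftrightarrow> (\<exists>S c. finite S \<and> S \<subseteq> {\<alpha>::nat list. length \<alpha> = r} \<and>
     (\<forall>x. length x = r \<longrightarrow> P x = (\<Sum>\<alpha>\<in>S. c \<alpha> * (\<Prod>i<r. x ! i ^ (\<alpha> ! i)))))"

text \<open>F is hypergeometric in its r
  variables if each shift ratio F(..,x_i+1,..)/F(..,x_i,..) equals a rational function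
  (wherever the ratio and the rational function are defined).\<close>
definition hypergeometric_in :: "nat \<Rightarrow> (complex list \<Rightarrow> complex) \<Rightarrow> bool" where
  "hypergeometric_in r F \<longleftrightarrow> (\<forall>i<r. \<exists>P Q. mpoly_fun r P \<and> mpoly_fun r Q \<and>
     (\<exists>x. length x = r \<and> Q x \<noteq> 0) \<and>
     (\<forall>x. length x = r \<and> F x \<noteq> 0 \<and> Q x \<noteq> 0 \<longrightarrow>
          F (x[i := x ! i + 1]) = P x / Q x * F x))"

definition hypergeometric2 :: "(int \<Rightarrow> int \<Rightarrow> complex) \<Rightarrow> bool" where
  "hypergeometric2 F \<longleftrightarrow>
     (\<exists>P Q. mpoly_fun 2 P \<and> mpoly_fun 2 Q \<and> (\<exists>x. length x = 2 \<and> Q x \<noteq> 0) \<and>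
       (\<forall>n k. F n k \<noteq> 0 \<and> Q [of_int n, of_int k] \<noteq> 0 \<longrightarrow>
          F (n + 1) k = P [of_int n, of_int k] / Q [of_int n, of_int k] * F n k)) \<and>
     (\<exists>P Q. mpoly_fun 2 P \<and> mpoly_fun 2 Q \<and> (\<exists>x. length x = 2 \<and> Q x \<noteq> 0) \<and>
       (\<forall>n k. F n k \<noteq> 0 \<and> Q [of_int n, of_int k] \<noteq> 0 \<longrightarrow>
          F n (k + 1) = P [of_int n, of_int k] / Q [of_int n, of_int k] * F n k))"

definition WZ_pair :: "(int \<Rightarrow> int \<Rightarrow> complex) \<Rightarrow> (int \<Rightarrow> int \<Rightarrow> complex) \<Rightarrow> bool" where
  "WZ_pair F G \<longleftrightarrow> hypergeometric2 F \<and> hypergeometric2 G \<and>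
     (\<forall>n k. F (n + 1) k - F n k = G n (k + 1) - G n k)"

definition seed_point :: "int \<Rightarrow> int list \<Rightarrow> complex \<Rightarrow> complex list \<Rightarrow> int \<Rightarrow> int \<Rightarrow> complex list" where
  "seed_point K As k0 ps n k =
     (of_int K * of_int n + k0 + of_int k) # map2 (\<lambda>A p. of_int A * of_int n + p) As ps"

text \<open>The predicate regular
  expresses that F0 is genuinely defined (no pole) at a point; the mate is required for all
  shift data and parameters for which the specialised term is defined at all integer n,k.\<close>
definition WZ_seed :: "nat \<Rightarrow> (complex list \<Rightarrow> bool) \<Rightarrow> (complex list \<Rightarrow> complex) \<Rightarrow> bool" where
  "WZ_seed r regular F0 \<longleftrightarrow> hypergeometric_in (Suc r) F0 \<and>
     (\<forall>(K::int) (As::int list) (k0::complex) (ps::complex list).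
        length As = r \<and> length ps = r \<and> (\<forall>n k. regular (seed_point K As k0 ps n k)) \<longrightarrow>
        (\<exists>G. WZ_pair (\<lambda>n k. F0 (seed_point K As k0 ps n k)) G))"

text \<open>The concrete seed. Division by Gamma at a pole gives 0, which is the correct value
  of 1/Gamma there.\<close>
definition F0 :: "complex \<Rightarrow> complex \<Rightarrow> complex \<Rightarrow> complex \<Rightarrow> complex \<Rightarrow> complex \<Rightarrow> complex \<Rightarrow> complex" where
  "F0 k a b c d e f =
     neg_one_pow f * (f + 2 * k) *
     (Gamma (a + k) * Gamma (b + k) * Gamma (c + k) * Gamma (d + k) * Gamma (e + k)
        * Gamma (3 * f - a - b - c - d - e + 1 + k))
     / (Gamma (f - a + 1 + k) * Gamma (f - b + 1 + k) * Gamma (f - c + 1 + k)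
        * Gamma (f - d + 1 + k) * Gamma (f - e + 1 + k) * Gamma (a + b + c + d + e - 2 * f + k))
     * (Gamma (a + b + c + d - 2 * f) * Gamma (a + b + c + e - 2 * f) * Gamma (a + b + d + e - 2 * f)
        * Gamma (a + c + d + e - 2 * f) * Gamma (b + c + d + e - 2 * f))
     / (Gamma (a + b - f) * Gamma (a + c - f) * Gamma (a + d - f) * Gamma (a + e - f)
        * Gamma (b + c - f) * Gamma (b + d - f) * Gamma (b + e - f) * Gamma (c + d - f)
        * Gamma (c + e - f) * Gamma (d + e - f))"

definition F0_list :: "complex list \<Rightarrow> complex" where
  "F0_list x = F0 (x!0) (x!1) (x!2) (x!3) (x!4) (x!5) (x!6)"

definition F0_num_args :: "complex \<Rightarrow> complex \<Rightarrow> complex \<Rightarrow> complex \<Rightarrow> complex \<Rightarrow> complex \<Rightarrow> complex \<Rightarrow> complex list" where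
  "F0_num_args k a b c d e f =
     [a + k, b + k, c + k, d + k, e + k, 3 * f - a - b - c - d - e + 1 + k,
      a + b + c + d - 2 * f, a + b + c + e - 2 * f, a + b + d + e - 2 * f,
      a + c + d + e - 2 * f, b + c + d + e - 2 * f]"

definition F0_regular :: "complex list \<Rightarrow> bool" where
  "F0_regular x \<longleftrightarrow>
     (\<forall>z \<in> set (F0_num_args (x!0) (x!1) (x!2) (x!3) (x!4) (x!5) (x!6)). z \<notin> \<int>\<^sub>\<le>\<^sub>0)"

end

theory Submission
  imports Defs "HOL-Computational_Algebra.Polynomial"
begin


definition mono_of :: "nat \<Rightarrow> nat list \<Rightarrow> complex list \<Rightarrow> complex" where
  "mono_of r \<alpha> x = (\<Prod>i<r. x ! i ^ (\<alpha> ! i))"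

lemma mpoly_fun_alt: "mpoly_fun r P \<longleftrightarrow> (\<exists>S c. finite S \<and> S \<subseteq> {\<alpha>::nat list. length \<alpha> = r} \<and>
     (\<forall>x. length x = r \<longrightarrow> P x = (\<Sum>\<alpha>\<in>S. c \<alpha> * mono_of r \<alpha> x)))"
  unfolding mpoly_fun_def mono_of_def by simp

lemma mpoly_cong:
  assumes "mpoly_fun r P" "\<And>x. length x = r \<Longrightarrow> P x = Q x"
  shows "mpoly_fun r Q"
  using assms unfolding mpoly_fun_def by metis

lemma mpoly_const: "mpoly_fun r (\<lambda>x. c)"
  unfolding mpoly_fun_alt
  by (rule exI[of _ "{replicate r 0}"], rule exI[of _ "\<lambda>_. c"]) (simp add: mono_of_def)

lemma mpoly_var:
  assumes "i < r" shows "mpoly_fun r (\<lambda>x. x ! i)"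
  unfolding mpoly_fun_alt
proof (rule exI[of _ "{(replicate r 0)[i := 1]}"], rule exI[of _ "\<lambda>_. 1"], intro conjI allI impI)
  fix x :: "complex list" assume "length x = r"
  have "mono_of r ((replicate r 0)[i := 1]) x = (\<Prod>j<r. if j = i then x ! j else 1)"
    unfolding mono_of_def by (rule prod.cong) (auto simp: nth_list_update)
  also have "\<dots> = x ! i" using assms by (simp add: prod.delta)
  finally show "x ! i = (\<Sum>\<alpha>\<in>{(replicate r 0)[i := 1]}. 1 * mono_of r \<alpha> x)" by simp
qed auto

lemma mpoly_add:
  assumes "mpoly_fun r P" "mpoly_fun r Q" shows "mpoly_fun r (\<lambda>x. P x + Q x)"
proof -
  from assms(1) obtain S1 c1 where 1: "finite S1" "S1 \<subseteq> {\<alpha>. length \<alpha> = r}"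
    "\<forall>x. length x = r \<longrightarrow> P x = (\<Sum>\<alpha>\<in>S1. c1 \<alpha> * mono_of r \<alpha> x)" unfolding mpoly_fun_alt by blast
  from assms(2) obtain S2 c2 where 2: "finite S2" "S2 \<subseteq> {\<alpha>. length \<alpha> = r}"
    "\<forall>x. length x = r \<longrightarrow> Q x = (\<Sum>\<alpha>\<in>S2. c2 \<alpha> * mono_of r \<alpha> x)" unfolding mpoly_fun_alt by blast
  let ?c = "\<lambda>\<alpha>. (if \<alpha> \<in> S1 then c1 \<alpha> else 0) + (if \<alpha> \<in> S2 then c2 \<alpha> else 0)"
  show ?thesis unfolding mpoly_fun_alt
  proof (rule exI[of _ "S1 \<union> S2"], rule exI[of _ ?c], intro conjI allI impI)
    fix x :: "complex list" assume x: "length x = r"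
    have a: "(\<Sum>\<alpha>\<in>S1. c1 \<alpha> * mono_of r \<alpha> x) = (\<Sum>\<alpha>\<in>S1 \<union> S2. (if \<alpha> \<in> S1 then c1 \<alpha> else 0) * mono_of r \<alpha> x)"
      by (rule sum.mono_neutral_cong_left) (use 1 2 in auto)
    have b: "(\<Sum>\<alpha>\<in>S2. c2 \<alpha> * mono_of r \<alpha> x) = (\<Sum>\<alpha>\<in>S1 \<union> S2. (if \<alpha> \<in> S2 then c2 \<alpha> else 0) * mono_of r \<alpha> x)"
      by (rule sum.mono_neutral_cong_left) (use 1 2 in auto)
    show "P x + Q x = (\<Sum>\<alpha>\<in>S1 \<union> S2. ?c \<alpha> * mono_of r \<alpha> x)"
      using 1(3) 2(3) x a b by (simp add: sum.distrib distrib_right)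
  qed (use 1 2 in auto)
qed

lemma mono_of_mult:
  assumes "length \<alpha> = r" "length \<beta> = r"
  shows "mono_of r \<alpha> x * mono_of r \<beta> x = mono_of r (map2 (+) \<alpha> \<beta>) x"
  unfolding mono_of_def prod.distrib[symmetric]
  by (rule prod.cong) (use assms in \<open>auto simp: power_add\<close>)

lemma mpoly_mult:
  assumes "mpoly_fun r P" "mpoly_fun r Q" shows "mpoly_fun r (\<lambda>x. P x * Q x)"
proof -
  from assms(1) obtain S1 c1 where 1: "finite S1" "S1 \<subseteq> {\<alpha>. length \<alpha> = r}"
    "\<forall>x. length x = r \<longrightarrow> P x = (\<Sum>\<alpha>\<in>S1. c1 \<alpha> * mono_of r \<alpha> x)" unfolding mpoly_fun_alt by blast
  from assms(2) obtain S2 c2 where 2: "finite S2" "S2 \<subseteq> {\<alpha>. length \<alpha> = r}"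
    "\<forall>x. length x = r \<longrightarrow> Q x = (\<Sum>\<alpha>\<in>S2. c2 \<alpha> * mono_of r \<alpha> x)" unfolding mpoly_fun_alt by blast
  define h where "h = (\<lambda>(\<alpha>::nat list,\<beta>::nat list). map2 (+) \<alpha> \<beta>)"
  define g where "g = (\<lambda>(\<alpha>,\<beta>). c1 \<alpha> * c2 \<beta>)"
  let ?c = "\<lambda>\<gamma>. \<Sum>p\<in>{p. p \<in> S1 \<times> S2 \<and> h p = \<gamma>}. g p"
  have fin: "finite (S1 \<times> S2)" using 1 2 by auto
  show ?thesis unfolding mpoly_fun_alt
  proof (rule exI[of _ "h ` (S1 \<times> S2)"], rule exI[of _ ?c], intro conjI allI impI)
    show "finite (h ` (S1 \<times> S2))" using fin by auto
    show "h ` (S1 \<times> S2) \<subseteq> {\<alpha>. length \<alpha> = r}" using 1(2) 2(2) by (fastforce simp: h_def)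
    fix x :: "complex list" assume x: "length x = r"
    have "P x * Q x = (\<Sum>\<alpha>\<in>S1. \<Sum>\<beta>\<in>S2. (c1 \<alpha> * mono_of r \<alpha> x) * (c2 \<beta> * mono_of r \<beta> x))"
      using 1(3) 2(3) x by (simp add: sum_product)
    also have "\<dots> = (\<Sum>p\<in>S1 \<times> S2. g p * mono_of r (h p) x)"
      unfolding sum.cartesian_product
    proof (rule sum.cong[OF refl])
      fix p assume "p \<in> S1 \<times> S2"
      then obtain \<alpha> \<beta> where p: "p = (\<alpha>,\<beta>)" "\<alpha> \<in> S1" "\<beta> \<in> S2" by auto
      then have "length \<alpha> = r" "length \<beta> = r" using 1 2 by auto
      then show "(case p of (\<alpha>, \<beta>) \<Rightarrow> c1 \<alpha> * mono_of r \<alpha> x * (c2 \<beta> * mono_of r \<beta> x)) = g p * mono_of r (h p) x"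
        using p by (simp add: g_def h_def mono_of_mult[symmetric] mult_ac)
    qed
    also have "\<dots> = (\<Sum>\<gamma>\<in>h ` (S1 \<times> S2). \<Sum>p\<in>{p. p \<in> S1 \<times> S2 \<and> h p = \<gamma>}. g p * mono_of r (h p) x)"
      by (rule sum.image_gen[OF fin])
    also have "\<dots> = (\<Sum>\<gamma>\<in>h ` (S1 \<times> S2). ?c \<gamma> * mono_of r \<gamma> x)"
      by (rule sum.cong[OF refl]) (simp add: sum_distrib_right)
    finally show "P x * Q x = (\<Sum>\<gamma>\<in>h ` (S1 \<times> S2). ?c \<gamma> * mono_of r \<gamma> x)" .
  qed
qed

lemma mpoly_sum:
  assumes "finite A" "\<And>a. a \<in> A \<Longrightarrow> mpoly_fun r (P a)"
  shows "mpoly_fun r (\<lambda>x. \<Sum>a\<in>A. P a x)"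
  using assms by (induction A rule: finite_induct) (auto intro: mpoly_const mpoly_add)

lemma mpoly_prod:
  assumes "finite A" "\<And>a. a \<in> A \<Longrightarrow> mpoly_fun r (P a)"
  shows "mpoly_fun r (\<lambda>x. \<Prod>a\<in>A. P a x)"
  using assms by (induction A rule: finite_induct) (auto intro: mpoly_const mpoly_mult)

lemma mpoly_pow:
  assumes "mpoly_fun r P" shows "mpoly_fun r (\<lambda>x. P x ^ n)"
  by (induction n) (auto intro: mpoly_const mpoly_mult assms)

lemma mpoly_minus: assumes "mpoly_fun r P" shows "mpoly_fun r (\<lambda>x. - P x)"
  using mpoly_mult[OF mpoly_const[of r "-1"] assms] by simp

lemma mpoly_diff: assumes "mpoly_fun r P" "mpoly_fun r Q" shows "mpoly_fun r (\<lambda>x. P x - Q x)"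
  using mpoly_add[OF assms(1) mpoly_minus[OF assms(2)]] by simp

lemma mpoly_poch: assumes "mpoly_fun r P" shows "mpoly_fun r (\<lambda>x. pochhammer (P x) n)"
  unfolding pochhammer_prod
  by (rule mpoly_prod) (auto intro: mpoly_add mpoly_const assms)

lemma mpoly_subst:
  assumes P: "mpoly_fun r P" and f: "\<And>j. j < r \<Longrightarrow> mpoly_fun r' (f j)"
  shows "mpoly_fun r' (\<lambda>x. P (map (\<lambda>j. f j x) [0..<r]))"
proof -
  from P obtain S c where 1: "finite S" "S \<subseteq> {\<alpha>. length \<alpha> = r}"
    "\<forall>x. length x = r \<longrightarrow> P x = (\<Sum>\<alpha>\<in>S. c \<alpha> * mono_of r \<alpha> x)" unfolding mpoly_fun_alt by blast
  have "mpoly_fun r' (\<lambda>x. \<Sum>\<alpha>\<in>S. c \<alpha> * (\<Prod>i<r. f i x ^ (\<alpha> ! i)))"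
    by (intro mpoly_sum mpoly_mult mpoly_const mpoly_prod mpoly_pow f 1) auto
  then show ?thesis
    by (rule mpoly_cong) (simp add: 1(3) mono_of_def)
qed

lemma mpoly_line:
  assumes "mpoly_fun r P" "length x = r" "length v = r"
  shows "\<exists>p. \<forall>t. P (map2 (\<lambda>a b. a + t * b) x v) = poly p t"
proof -
  from assms(1) obtain S c where 1: "finite S" "S \<subseteq> {\<alpha>. length \<alpha> = r}"
    "\<forall>x. length x = r \<longrightarrow> P x = (\<Sum>\<alpha>\<in>S. c \<alpha> * mono_of r \<alpha> x)" unfolding mpoly_fun_alt by blast
  let ?p = "\<Sum>\<alpha>\<in>S. smult (c \<alpha>) (\<Prod>i<r. [:x ! i, v ! i:] ^ (\<alpha> ! i))"
  show ?thesis
  proof (rule exI[of _ ?p], intro allI)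
    fix t
    show "P (map2 (\<lambda>a b. a + t * b) x v) = poly ?p t"
      using assms(2,3) by (simp add: 1(3) mono_of_def poly_sum poly_prod)
  qed
qed

lemma mpoly_mult_nz:
  assumes P: "mpoly_fun r P" and Q: "mpoly_fun r Q"
    and x: "length x = r" "P x \<noteq> 0" and y: "length y = r" "Q y \<noteq> 0"
  shows "\<exists>z. length z = r \<and> P z * Q z \<noteq> 0"
proof -
  define v where "v = map2 (-) y x"
  have lv: "length v = r" using x y by (simp add: v_def)
  define line where "line t = map2 (\<lambda>a b. a + t * b) x v" for t :: complex
  have l0: "line 0 = x" using x lv by (intro nth_equalityI) (auto simp: line_def)
  have l1: "line 1 = y" using x y lv by (intro nth_equalityI) (auto simp: line_def v_def)
  obtain p where p: "\<And>t. P (line t) = poly p t" using mpoly_line[OF P x(1) lv] unfolding line_def by blast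
  obtain q where q: "\<And>t. Q (line t) = poly q t" using mpoly_line[OF Q x(1) lv] unfolding line_def by blast
  have "p \<noteq> 0" using p[of 0] l0 x by auto
  moreover have "q \<noteq> 0" using q[of 1] l1 y by auto
  ultimately have "p * q \<noteq> 0" by simp
  then have "finite {t. poly (p * q) t = 0}" by (rule poly_roots_finite)
  then obtain t where "t \<notin> {t. poly (p * q) t = 0}"
    using ex_new_if_finite[OF infinite_UNIV_char_0] by blast
  then have "P (line t) * Q (line t) \<noteq> 0" using p q by simp
  moreover have "length (line t) = r" using x lv by (simp add: line_def)
  ultimately show ?thesis by blast
qed




definition hypok :: "nat \<Rightarrow> nat \<Rightarrow> (complex list \<Rightarrow> complex) \<Rightarrow> bool" where
  "hypok r i F \<longleftrightarrow> (\<exists>P Q. mpoly_fun r P \<and> mpoly_fun r Q \<and>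
     (\<exists>x. length x = r \<and> Q x \<noteq> 0) \<and>
     (\<forall>x. length x = r \<and> F x \<noteq> 0 \<and> Q x \<noteq> 0 \<longrightarrow>
          F (x[i := x ! i + 1]) = P x / Q x * F x))"

lemma hypergeometric_in_hypok: "hypergeometric_in r F \<longleftrightarrow> (\<forall>i<r. hypok r i F)"
  unfolding hypergeometric_in_def hypok_def by simp

lemma hypokI:
  assumes "mpoly_fun r P" "mpoly_fun r Q" "length x0 = r" "Q x0 \<noteq> 0"
    "\<And>x. length x = r \<Longrightarrow> F x \<noteq> 0 \<Longrightarrow> Q x \<noteq> 0 \<Longrightarrow> F (x[i := x ! i + 1]) = P x / Q x * F x"
  shows "hypok r i F"
  unfolding hypok_def using assms by blast

lemma hypok_cong:
  assumes "hypok r i F" "\<And>x. length x = r \<Longrightarrow> F x = G x"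
  shows "hypok r i G"
  using assms unfolding hypok_def by (metis length_list_update)

lemma hypok_mult:
  assumes "hypok r i F" "hypok r i G"
  shows "hypok r i (\<lambda>x. F x * G x)"
proof -
  from assms(1) obtain P1 Q1 x1 where 1: "mpoly_fun r P1" "mpoly_fun r Q1" "length x1 = r" "Q1 x1 \<noteq> 0"
    "\<forall>x. length x = r \<and> F x \<noteq> 0 \<and> Q1 x \<noteq> 0 \<longrightarrow> F (x[i := x ! i + 1]) = P1 x / Q1 x * F x"
    unfolding hypok_def by blast
  from assms(2) obtain P2 Q2 x2 where 2: "mpoly_fun r P2" "mpoly_fun r Q2" "length x2 = r" "Q2 x2 \<noteq> 0"
    "\<forall>x. length x = r \<and> G x \<noteq> 0 \<and> Q2 x \<noteq> 0 \<longrightarrow> G (x[i := x ! i + 1]) = P2 x / Q2 x * G x"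
    unfolding hypok_def by blast
  obtain z where z: "length z = r" "Q1 z * Q2 z \<noteq> 0"
    using mpoly_mult_nz[OF 1(2) 2(2) 1(3,4) 2(3,4)] by blast
  show ?thesis
    by (rule hypokI[OF mpoly_mult[OF 1(1) 2(1)] mpoly_mult[OF 1(2) 2(2)] z])
       (use 1(5) 2(5) in auto)
qed

lemma hypok_const: "hypok r i (\<lambda>x. c)"
  by (rule hypokI[of r "\<lambda>_. 1" "\<lambda>_. 1" "replicate r 0"]) (auto intro: mpoly_const)

lemma hypok_prod:
  assumes "finite A" "\<And>a. a \<in> A \<Longrightarrow> hypok r i (F a)"
  shows "hypok r i (\<lambda>x. \<Prod>a\<in>A. F a x)"
  using assms by (induction A rule: finite_induct) (auto intro: hypok_const hypok_mult)

lemma mpoly_shift: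
  assumes "mpoly_fun r P" "i < r"
  shows "mpoly_fun r (\<lambda>x. P (x[i := x ! i + 1]))"
proof -
  have "mpoly_fun r (\<lambda>x. P (map (\<lambda>j. (if j = i then x ! j + 1 else x ! j)) [0..<r]))"
    apply (rule mpoly_subst[OF assms(1)])
    subgoal for j by (cases "j = i") (auto intro: mpoly_add mpoly_var mpoly_const)
    done
  then show ?thesis
    by (rule mpoly_cong) (auto intro!: arg_cong[where f=P] nth_equalityI simp: nth_list_update)
qed

lemma hypok_mpoly:
  assumes "mpoly_fun r P" "i < r"
  shows "hypok r i P"
proof (cases "\<exists>x. length x = r \<and> P x \<noteq> 0")
  case True
  then obtain x0 where "length x0 = r" "P x0 \<noteq> 0" by blast
  then show ?thesis
    by (intro hypokI[OF mpoly_shift[OF assms] assms(1), of x0]) auto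
next
  case False
  then show ?thesis
    by (intro hypokI[of r "\<lambda>_. 0" "\<lambda>_. 1" "replicate r 0"]) (auto intro: mpoly_const)
qed

definition aff :: "nat \<Rightarrow> (nat \<Rightarrow> int) \<Rightarrow> complex \<Rightarrow> complex list \<Rightarrow> complex" where
  "aff r cs c0 x = (\<Sum>j<r. of_int (cs j) * x ! j) + c0"

lemma mpoly_aff: "mpoly_fun r (aff r cs c0)"
  unfolding aff_def
  by (intro mpoly_add mpoly_sum mpoly_mult mpoly_const mpoly_var) auto

lemma aff_shift:
  assumes "i < r" "length x = r"
  shows "aff r cs c0 (x[i := x ! i + 1]) = aff r cs c0 x + of_int (cs i)"
proof -
  have "(\<Sum>j<r. of_int (cs j) * x[i := x ! i + 1] ! j) =
        (\<Sum>j<r. of_int (cs j) * x ! j + (if j = i then of_int (cs j) else 0))"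
    by (rule sum.cong) (use assms in \<open>auto simp: nth_list_update algebra_simps\<close>)
  also have "\<dots> = (\<Sum>j<r. of_int (cs j) * x ! j) + of_int (cs i)"
    using assms by (simp add: sum.distrib)
  finally show ?thesis unfolding aff_def by simp
qed

lemma aff_point:
  assumes "i < r" "cs i \<noteq> 0"
  shows "\<exists>x. length x = r \<and> aff r cs c0 x = w"
proof -
  define x where "x = (replicate r (0::complex))[i := (w - c0) / of_int (cs i)]"
  have "(\<Sum>j<r. of_int (cs j) * x ! j) = (\<Sum>j<r. if j = i then of_int (cs j) * ((w - c0) / of_int (cs i)) else 0)"
    by (rule sum.cong) (auto simp: x_def nth_list_update)
  also have "\<dots> = w - c0" using assms by simp
  finally show ?thesis using assms by (intro exI[of _ x]) (auto simp: aff_def x_def)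
qed



lemma poch_half_nz: "pochhammer (1/2 :: complex) m \<noteq> 0"
proof
  assume "pochhammer (1/2 :: complex) m = 0"
  then obtain k where k: "(1/2::complex) = - of_nat k" by (auto simp: pochhammer_eq_0_iff)
  have "Re (1/2::complex) = Re (- of_nat k)" using k by (rule arg_cong)
  then show False by simp
qed
lemma poch_nonpos:
  assumes "pochhammer z m \<noteq> 0" "z + of_nat m \<notin> \<int>\<^sub>\<le>\<^sub>0"
  shows "(z::complex) \<notin> \<int>\<^sub>\<le>\<^sub>0"
proof
  assume "z \<in> \<int>\<^sub>\<le>\<^sub>0"
  then obtain j where j: "z = - of_nat j" by (auto elim!: nonpos_Ints_cases')
  show False
  proof (cases "j < m")
    case True then show False using assms(1) j by (auto simp: pochhammer_eq_0_iff)
  next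
    case False
    then have "z + of_nat m = - of_nat (j - m)" using j by (simp add: of_nat_diff)
    then show False using assms(2) by auto
  qed
qed

lemma neg_one_pow_plus1: "neg_one_pow (z + 1) = - neg_one_pow z"
  unfolding neg_one_pow_def by (simp add: distrib_left exp_add)

lemma neg_one_pow_int: "neg_one_pow (z + of_int d) = (if even d then 1 else -1) * neg_one_pow z"
proof (induction d rule: int_induct[where k=0])
  case base then show ?case by simp
next
  case (step1 i)
  have "neg_one_pow (z + of_int (i + 1)) = - neg_one_pow (z + of_int i)"
    using neg_one_pow_plus1[of "z + of_int i"] by (simp add: add_ac)
  then show ?case using step1 by simp
next
  case (step2 i)
  have "neg_one_pow (z + of_int i) = - neg_one_pow (z + of_int (i - 1))"
    using neg_one_pow_plus1[of "z + of_int (i - 1)"] by (simp add: add_ac)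
  then show ?case using step2 by (auto split: if_splits)
qed

lemma hypok_neg1_aff:
  assumes i: "i < r"
  shows "hypok r i (\<lambda>x. neg_one_pow (aff r cs c0 x))"
  by (rule hypokI[of r "\<lambda>_. if even (cs i) then 1 else -1" "\<lambda>_. 1" "replicate r 0"])
     (auto intro: mpoly_const simp: aff_shift[OF i] neg_one_pow_int)



lemma Gamma_shift_up:
  assumes "z \<notin> \<int>\<^sub>\<le>\<^sub>0" shows "Gamma (z + of_nat m) = pochhammer z m * Gamma z"
proof -
  have "Gamma z \<noteq> 0" using assms by (simp add: Gamma_eq_zero_iff)
  then show ?thesis using pochhammer_Gamma[OF assms, of m] by (simp add: divide_simps)
qed

lemma rGamma_shift_up: "rGamma z = pochhammer z m * rGamma (z + of_nat m)"
  by (rule pochhammer_rGamma)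

lemma hypok_Gamma_aff:
  assumes i: "i < r"
  shows "hypok r i (\<lambda>x. Gamma (aff r cs c0 x))"
proof (cases "cs i \<ge> 0")
  case True
  define m where "m = nat (cs i)"
  have csm: "of_int (cs i) = (of_nat m :: complex)" using True by (simp add: m_def)
  show ?thesis
  proof (rule hypokI[of r "\<lambda>x. pochhammer (aff r cs c0 x) m" "\<lambda>_. 1" "replicate r 0"])
    fix x :: "complex list" assume x: "length x = r" "Gamma (aff r cs c0 x) \<noteq> 0"
    then have 1: "aff r cs c0 x \<notin> \<int>\<^sub>\<le>\<^sub>0" by (simp add: Gamma_eq_zero_iff)
    have "aff r cs c0 (x[i := x ! i + 1]) = aff r cs c0 x + of_nat m"
      using aff_shift[OF i x(1)] csm by simp
    then show "Gamma (aff r cs c0 (x[i := x ! i + 1])) = pochhammer (aff r cs c0 x) m / 1 * Gamma (aff r cs c0 x)"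
      using Gamma_shift_up[OF 1, of m] by simp
  qed (auto intro: mpoly_poch mpoly_aff mpoly_const)
next
  case False
  define m where "m = nat (- cs i)"
  have csm: "of_int (cs i) = - (of_nat m :: complex)" using False by (simp add: m_def)
  obtain x0 where x0: "length x0 = r" "aff r cs c0 x0 = 1/2 + of_nat m"
    using aff_point[OF i, of cs c0 "1/2 + of_nat m"] False by force
  show ?thesis
  proof (rule hypokI[of r "\<lambda>_. 1" "\<lambda>x. pochhammer (aff r cs c0 x - of_nat m) m" x0])
    show "pochhammer (aff r cs c0 x0 - of_nat m) m \<noteq> 0" using x0(2) poch_half_nz by simp
    show "mpoly_fun r (\<lambda>x. pochhammer (aff r cs c0 x - of_nat m) m)"
      by (intro mpoly_poch mpoly_diff mpoly_aff mpoly_const)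
    fix x :: "complex list" assume x: "length x = r" "Gamma (aff r cs c0 x) \<noteq> 0"
      "pochhammer (aff r cs c0 x - of_nat m) m \<noteq> 0"
    then have 1: "aff r cs c0 x \<notin> \<int>\<^sub>\<le>\<^sub>0" by (simp add: Gamma_eq_zero_iff)
    then have 2: "aff r cs c0 x - of_nat m \<notin> \<int>\<^sub>\<le>\<^sub>0" using poch_nonpos[OF x(3)] by simp
    have e: "aff r cs c0 (x[i := x ! i + 1]) = aff r cs c0 x - of_nat m"
      using aff_shift[OF i x(1)] csm by simp
    have "Gamma (aff r cs c0 x) = pochhammer (aff r cs c0 x - of_nat m) m * Gamma (aff r cs c0 x - of_nat m)"
      using Gamma_shift_up[OF 2, of m] by simp
    then show "Gamma (aff r cs c0 (x[i := x ! i + 1])) = 1 / pochhammer (aff r cs c0 x - of_nat m) m * Gamma (aff r cs c0 x)"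
      unfolding e using x(3) by simp
  qed (use x0 in \<open>auto intro: mpoly_const\<close>)
qed

lemma hypok_rGamma_aff:
  assumes i: "i < r"
  shows "hypok r i (\<lambda>x. rGamma (aff r cs c0 x))"
proof (cases "cs i \<ge> 0")
  case True
  define m where "m = nat (cs i)"
  have csm: "of_int (cs i) = (of_nat m :: complex)" using True by (simp add: m_def)
  obtain x0 where x0: "length x0 = r" "pochhammer (aff r cs c0 x0) m \<noteq> 0"
  proof (cases "cs i = 0")
    case True then show ?thesis using that[of "replicate r 0"] by (simp add: m_def)
  next
    case False
    then obtain x0 where h: "length x0 = r" "aff r cs c0 x0 = 1/2" using aff_point[OF i] by blast
    have "pochhammer (aff r cs c0 x0) m \<noteq> 0" unfolding h(2) by (rule poch_half_nz)
    then show ?thesis using that[of x0] h(1) by blast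
  qed
  show ?thesis
  proof (rule hypokI[of r "\<lambda>_. 1" "\<lambda>x. pochhammer (aff r cs c0 x) m" x0])
    fix x :: "complex list" assume x: "length x = r" "rGamma (aff r cs c0 x) \<noteq> 0"
      "pochhammer (aff r cs c0 x) m \<noteq> 0"
    have e: "aff r cs c0 (x[i := x ! i + 1]) = aff r cs c0 x + of_nat m"
      using aff_shift[OF i x(1)] csm by simp
    show "rGamma (aff r cs c0 (x[i := x ! i + 1])) = 1 / pochhammer (aff r cs c0 x) m * rGamma (aff r cs c0 x)"
      unfolding e using rGamma_shift_up[of "aff r cs c0 x" m] x(3) by simp
  qed (use x0 in \<open>auto intro: mpoly_poch mpoly_aff mpoly_const\<close>)
next
  case False
  define m where "m = nat (- cs i)"
  have csm: "of_int (cs i) = - (of_nat m :: complex)" using False by (simp add: m_def)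
  show ?thesis
  proof (rule hypokI[of r "\<lambda>x. pochhammer (aff r cs c0 x - of_nat m) m" "\<lambda>_. 1" "replicate r 0"])
    show "mpoly_fun r (\<lambda>x. pochhammer (aff r cs c0 x - of_nat m) m)"
      by (intro mpoly_poch mpoly_diff mpoly_aff mpoly_const)
    fix x :: "complex list" assume x: "length x = r"
    have e: "aff r cs c0 (x[i := x ! i + 1]) = aff r cs c0 x - of_nat m"
      using aff_shift[OF i x(1)] csm by simp
    show "rGamma (aff r cs c0 (x[i := x ! i + 1])) = pochhammer (aff r cs c0 x - of_nat m) m / 1 * rGamma (aff r cs c0 x)"
      unfolding e using rGamma_shift_up[of "aff r cs c0 x - of_nat m" m] by simp
  qed (auto intro: mpoly_const)
qed




definition numC :: "int list list" where
  "numC = [[1,1,0,0,0,0,0],[1,0,1,0,0,0,0],[1,0,0,1,0,0,0],[1,0,0,0,1,0,0],[1,0,0,0,0,1,0],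
    [1,-1,-1,-1,-1,-1,3],
    [0,1,1,1,1,0,-2],[0,1,1,1,0,1,-2],[0,1,1,0,1,1,-2],[0,1,0,1,1,1,-2],[0,0,1,1,1,1,-2]]"
definition numK :: "int list" where "numK = [0,0,0,0,0,1,0,0,0,0,0]"
definition denC :: "int list list" where
  "denC = [[1,-1,0,0,0,0,1],[1,0,-1,0,0,0,1],[1,0,0,-1,0,0,1],[1,0,0,0,-1,0,1],[1,0,0,0,0,-1,1],
    [1,1,1,1,1,1,-2],
    [0,1,1,0,0,0,-1],[0,1,0,1,0,0,-1],[0,1,0,0,1,0,-1],[0,1,0,0,0,1,-1],[0,0,1,1,0,0,-1],
    [0,0,1,0,1,0,-1],[0,0,1,0,0,1,-1],[0,0,0,1,1,0,-1],[0,0,0,1,0,1,-1],[0,0,0,0,1,1,-1]]"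
definition denK :: "int list" where "denK = [1,1,1,1,1,0,0,0,0,0,0,0,0,0,0,0]"

definition evf :: "int list \<Rightarrow> int \<Rightarrow> (nat \<Rightarrow> complex) \<Rightarrow> complex" where
  "evf c c0 y = (\<Sum>j<7. of_int (c ! j) * y j) + of_int c0"

definition numA :: "nat \<Rightarrow> (nat \<Rightarrow> complex) \<Rightarrow> complex" where
  "numA i y = evf (numC ! i) (numK ! i) y"
definition denA :: "nat \<Rightarrow> (nat \<Rightarrow> complex) \<Rightarrow> complex" where
  "denA j y = evf (denC ! j) (denK ! j) y"

definition KER :: "(nat \<Rightarrow> complex) \<Rightarrow> (nat \<Rightarrow> int) \<Rightarrow> complex" where
  "KER y s = (\<Prod>i<11. Gamma (numA i y + of_int (s i))) * (\<Prod>j<16. rGamma (denA j y + of_int (s (11 + j))))"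

definition addp :: "(nat \<Rightarrow> complex) \<Rightarrow> (nat \<Rightarrow> int) \<Rightarrow> (nat \<Rightarrow> complex)" where
  "addp y q = (\<lambda>j. y j + of_int (q j))"

definition linn :: "int list \<Rightarrow> (nat \<Rightarrow> int) \<Rightarrow> int" where
  "linn c q = (\<Sum>j<7. c ! j * q j)"

definition Lsh :: "(nat \<Rightarrow> int) \<Rightarrow> nat \<Rightarrow> int" where
  "Lsh q i = (if i < 11 then linn (numC ! i) q else linn (denC ! (i - 11)) q)"

lemma evf_addp: "evf c c0 (addp y q) = evf c c0 y + of_int (linn c q)"
  unfolding evf_def addp_def linn_def by (simp add: sum.distrib distrib_left algebra_simps)

lemma KER_addp: "KER (addp y q) s = KER y (\<lambda>i. s i + Lsh q i)"
  unfolding KER_def numA_def denA_def evf_addp Lsh_def by (simp add: add_ac)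

definition RP :: "(nat \<Rightarrow> complex) \<Rightarrow> (nat \<Rightarrow> int) \<Rightarrow> (nat \<Rightarrow> int) \<Rightarrow> complex" where
  "RP y s b = (\<Prod>i<11. pochhammer (numA i y + of_int (b i)) (nat (s i - b i))) *
              (\<Prod>j<16. pochhammer (denA j y + of_int (s (11 + j))) (nat (b (11 + j) - s (11 + j))))"

lemma KER_reduce:
  assumes "\<And>i. i < 11 \<Longrightarrow> b i \<le> s i" "\<And>j. j < 16 \<Longrightarrow> s (11 + j) \<le> b (11 + j)"
    "\<And>i. i < 11 \<Longrightarrow> numA i y + of_int (b i) \<notin> \<int>\<^sub>\<le>\<^sub>0"
  shows "KER y s = RP y s b * KER y b"
proof -
  have 1: "Gamma (numA i y + of_int (s i)) = pochhammer (numA i y + of_int (b i)) (nat (s i - b i)) * Gamma (numA i y + of_int (b i))"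
    if "i < 11" for i
  proof -
    have e: "numA i y + of_int (s i) = (numA i y + of_int (b i)) + of_nat (nat (s i - b i))"
      using assms(1)[OF that] by simp
    show ?thesis unfolding e by (rule Gamma_shift_up[OF assms(3)[OF that]])
  qed
  have 2: "rGamma (denA j y + of_int (s (11 + j))) = pochhammer (denA j y + of_int (s (11 + j))) (nat (b (11 + j) - s (11 + j))) * rGamma (denA j y + of_int (b (11 + j)))"
    if "j < 16" for j
  proof -
    have e: "denA j y + of_int (b (11 + j)) = (denA j y + of_int (s (11 + j))) + of_nat (nat (b (11 + j) - s (11 + j)))"
      using assms(2)[OF that] by simp
    show ?thesis unfolding e by (rule rGamma_shift_up)
  qed
  have A: "(\<Prod>i<11. Gamma (numA i y + of_int (s i))) = (\<Prod>i<11. pochhammer (numA i y + of_int (b i)) (nat (s i - b i))) * (\<Prod>i<11. Gamma (numA i y + of_int (b i)))"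
    unfolding prod.distrib[symmetric] by (rule prod.cong) (simp_all add: 1)
  have B: "(\<Prod>j<16. rGamma (denA j y + of_int (s (11 + j)))) = (\<Prod>j<16. pochhammer (denA j y + of_int (s (11 + j))) (nat (b (11 + j) - s (11 + j)))) * (\<Prod>j<16. rGamma (denA j y + of_int (b (11 + j))))"
    unfolding prod.distrib[symmetric] by (rule prod.cong) (simp_all add: 2)
  show ?thesis unfolding KER_def RP_def A B by (simp add: mult_ac)
qed

definition GoodP :: "(nat \<Rightarrow> complex) \<Rightarrow> bool" where
  "GoodP y \<longleftrightarrow> (\<forall>i<6. \<forall>m::int. numA i y + of_int m \<notin> \<int>\<^sub>\<le>\<^sub>0) \<and> (\<forall>i. 6 \<le> i \<and> i < 11 \<longrightarrow> numA i y \<notin> \<int>\<^sub>\<le>\<^sub>0)"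

lemma GoodP_base:
  assumes "GoodP y" "\<And>i. 6 \<le> i \<Longrightarrow> i < 11 \<Longrightarrow> b i = 0" "i < 11"
  shows "numA i y + of_int (b i) \<notin> \<int>\<^sub>\<le>\<^sub>0"
  using assms unfolding GoodP_def by (cases "i < 6") auto



lemma sum_lt7: "(\<Sum>j<(7::nat). f j) = f 0 + f 1 + f 2 + f 3 + f 4 + f 5 + (f 6 :: 'a::comm_monoid_add)"
  by (simp add: eval_nat_numeral add_ac)
lemma prod_lt11: "(\<Prod>j<(11::nat). f j) = f 0 * f 1 * f 2 * f 3 * f 4 * f 5 * f 6 * f 7 * f 8 * f 9 * (f 10 :: 'a::comm_monoid_mult)"
  by (simp add: eval_nat_numeral mult_ac)
lemma prod_lt16: "(\<Prod>j<(16::nat). f j) = f 0 * f 1 * f 2 * f 3 * f 4 * f 5 * f 6 * f 7 * f 8 * f 9 * f 10 * f 11 * f 12 * f 13 * f 14 * (f 15 :: 'a::comm_monoid_mult)"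
  by (simp add: eval_nat_numeral mult_ac)
lemma less11: "i < (11::nat) \<longleftrightarrow> i = 0 \<or> i = 1 \<or> i = 2 \<or> i = 3 \<or> i = 4 \<or> i = 5 \<or> i = 6 \<or> i = 7 \<or> i = 8 \<or> i = 9 \<or> i = 10"
  by presburger
lemma less16: "i < (16::nat) \<longleftrightarrow> i = 0 \<or> i = 1 \<or> i = 2 \<or> i = 3 \<or> i = 4 \<or> i = 5 \<or> i = 6 \<or> i = 7 \<or> i = 8 \<or> i = 9 \<or> i = 10 \<or> i = 11 \<or> i = 12 \<or> i = 13 \<or> i = 14 \<or> i = 15"
  by presburger

definition e0 :: "nat \<Rightarrow> int" where "e0 j = (if j = 0 then 1 else 0)"
definition stepv :: "nat \<Rightarrow> nat \<Rightarrow> int" where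
  "stepv v = (if v < 6 then (\<lambda>j. if j = v then 1 else 0) else (\<lambda>j. if j \<in> {3,4,5,6} then 1 else 0))"

definition shl :: "nat \<Rightarrow> int list" where
  "shl v = (if v = 1 then [0,0,0,0,0,-1,0,0,0,0,0, -1,-1,-1,-1,-1,0, 1,1,1,1,0,0,0,0,0,0]
       else if v = 2 then [0,0,0,0,0,-1,0,0,0,0,0, -1,-1,-1,-1,-1,0, 1,0,0,0,1,1,1,0,0,0]
       else if v = 3 then [0,0,0,0,0,-1,0,0,0,0,0, -1,-1,-1,-1,-1,0, 0,1,0,0,1,0,0,1,1,0]
       else if v = 4 then [0,0,0,0,0,-1,0,0,0,0,0, -1,-1,-1,-1,-1,0, 0,0,1,0,0,1,0,1,0,1]
       else if v = 5 then [0,0,0,0,0,-1,0,0,0,0,0, -1,-1,-1,-1,-1,0, 0,0,0,1,0,0,1,0,1,1]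
       else if v = 6 then [0,0,0,0,0,0,0,0,0,0,0, 0,0,-1,-1,-1,0, 0,0,0,0,0,0,0,1,1,1]
       else replicate 27 0)"
definition shv :: "nat \<Rightarrow> nat \<Rightarrow> int" where "shv v i = shl v ! i"

definition pvC :: "nat \<Rightarrow> int list" where
  "pvC v = (if v = 1 then [0,-2,-1,-1,-1,-1,3] else if v = 2 then [0,-1,-2,-1,-1,-1,3]
     else if v = 3 then [0,-1,-1,-2,-1,-1,3] else if v = 4 then [0,-1,-1,-1,-2,-1,3]
     else if v = 5 then [0,-1,-1,-1,-1,-2,3] else if v = 6 then [1,0,0,1,1,1,-1]
     else [2,0,0,0,0,0,1])"

definition Hgen :: "nat \<Rightarrow> (nat \<Rightarrow> complex) \<Rightarrow> complex" where
  "Hgen v y = neg_one_pow (y 6) * evf (pvC v) 0 y * KER y (shv v)"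

lemma Hgen_addp: "Hgen v (addp y q) = (if even (q 6) then 1 else -1) * neg_one_pow (y 6) *
    (evf (pvC v) 0 y + of_int (linn (pvC v) q)) * KER y (\<lambda>i. shv v i + Lsh q i)"
  unfolding Hgen_def KER_addp evf_addp by (simp add: addp_def neg_one_pow_int)

definition bl :: "nat \<Rightarrow> int list" where
  "bl v = (if v = 1 then [0,0,0,0,0,-1,0,0,0,0,0,0,0,0,0,0,1,1,1,1,1,0,0,0,0,0,0]
     else if v = 2 then [0,0,0,0,0,-1,0,0,0,0,0,0,0,0,0,0,1,1,0,0,0,1,1,1,0,0,0]
     else if v = 3 then [0,0,0,0,0,-1,0,0,0,0,0,0,0,0,0,0,1,0,1,0,0,1,0,0,1,1,0]
     else if v = 4 then [0,0,0,0,0,-1,0,0,0,0,0,0,0,0,0,0,1,0,0,1,0,0,1,0,1,0,1]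
     else if v = 5 then [0,0,0,0,0,-1,0,0,0,0,0,0,0,0,0,0,1,0,0,0,1,0,0,1,0,1,1]
     else [0,0,0,0,0,0,0,0,0,0,0,1,1,0,0,0,1,0,0,0,0,0,0,0,1,1,1])"

lemma unit6:
  assumes "GoodP y"
  shows "Hgen 0 (addp y (stepv 6)) - Hgen 0 y = Hgen 6 (addp y e0) - Hgen 6 y"
proof -
  define b where "b = (\<lambda>i. bl 6 ! i)"
  have bc: "\<And>i. 6 \<le> i \<Longrightarrow> i < 11 \<Longrightarrow> b i = 0" 
    by (auto simp: b_def bl_def less11)
  have G: "\<And>i. i < 11 \<Longrightarrow> numA i y + of_int (b i) \<notin> \<int>\<^sub>\<le>\<^sub>0" by (rule GoodP_base[OF assms bc])
  note defs = b_def bl_def shv_def shl_def Lsh_def linn_def stepv_def e0_def numC_def denC_def sum_lt7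
  have 1: "KER y (\<lambda>i. shv 0 i + Lsh (stepv 6) i) = RP y (\<lambda>i. shv 0 i + Lsh (stepv 6) i) b * KER y b"
    by (rule KER_reduce[OF _ _ G]) (auto simp: defs less11 less16)
  have 2: "KER y (shv 0) = RP y (shv 0) b * KER y b"
    by (rule KER_reduce[OF _ _ G]) (auto simp: defs less11 less16)
  have 3: "KER y (\<lambda>i. shv 6 i + Lsh e0 i) = RP y (\<lambda>i. shv 6 i + Lsh e0 i) b * KER y b"
    by (rule KER_reduce[OF _ _ G]) (auto simp: defs less11 less16)
  have 4: "KER y (shv 6) = RP y (shv 6) b * KER y b"
    by (rule KER_reduce[OF _ _ G]) (auto simp: defs less11 less16)
  show ?thesis
    unfolding Hgen_addp 1 3 unfolding Hgen_def 2 4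
    unfolding RP_def prod_lt11 prod_lt16 numA_def denA_def evf_def
    apply (simp add: defs numK_def denK_def pvC_def)
    by algebra
qed
lemma unit1:
  assumes "GoodP y"
  shows "Hgen 0 (addp y (stepv 1)) - Hgen 0 y = Hgen 1 (addp y e0) - Hgen 1 y"
proof -
  define b where "b = (\<lambda>i. bl 1 ! i)"
  have bc: "\<And>i. 6 \<le> i \<Longrightarrow> i < 11 \<Longrightarrow> b i = 0" 
    by (auto simp: b_def bl_def less11)
  have G: "\<And>i. i < 11 \<Longrightarrow> numA i y + of_int (b i) \<notin> \<int>\<^sub>\<le>\<^sub>0" by (rule GoodP_base[OF assms bc])
  note defs = b_def bl_def shv_def shl_def Lsh_def linn_def stepv_def e0_def numC_def denC_def sum_lt7
  have 1: "KER y (\<lambda>i. shv 0 i + Lsh (stepv 1) i) = RP y (\<lambda>i. shv 0 i + Lsh (stepv 1) i) b * KER y b"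
    by (rule KER_reduce[OF _ _ G]) (auto simp: defs less11 less16)
  have 2: "KER y (shv 0) = RP y (shv 0) b * KER y b"
    by (rule KER_reduce[OF _ _ G]) (auto simp: defs less11 less16)
  have 3: "KER y (\<lambda>i. shv 1 i + Lsh e0 i) = RP y (\<lambda>i. shv 1 i + Lsh e0 i) b * KER y b"
    by (rule KER_reduce[OF _ _ G]) (auto simp: defs less11 less16)
  have 4: "KER y (shv 1) = RP y (shv 1) b * KER y b"
    by (rule KER_reduce[OF _ _ G]) (auto simp: defs less11 less16)
  show ?thesis
    unfolding Hgen_addp 1 3 unfolding Hgen_def 2 4
    unfolding RP_def prod_lt11 prod_lt16 numA_def denA_def evf_def
    apply (simp add: defs numK_def denK_def pvC_def)
    by algebra
qed
lemma unit2:
  assumes "GoodP y"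
  shows "Hgen 0 (addp y (stepv 2)) - Hgen 0 y = Hgen 2 (addp y e0) - Hgen 2 y"
proof -
  define b where "b = (\<lambda>i. bl 2 ! i)"
  have bc: "\<And>i. 6 \<le> i \<Longrightarrow> i < 11 \<Longrightarrow> b i = 0" 
    by (auto simp: b_def bl_def less11)
  have G: "\<And>i. i < 11 \<Longrightarrow> numA i y + of_int (b i) \<notin> \<int>\<^sub>\<le>\<^sub>0" by (rule GoodP_base[OF assms bc])
  note defs = b_def bl_def shv_def shl_def Lsh_def linn_def stepv_def e0_def numC_def denC_def sum_lt7
  have 1: "KER y (\<lambda>i. shv 0 i + Lsh (stepv 2) i) = RP y (\<lambda>i. shv 0 i + Lsh (stepv 2) i) b * KER y b"
    by (rule KER_reduce[OF _ _ G]) (auto simp: defs less11 less16)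
  have 2: "KER y (shv 0) = RP y (shv 0) b * KER y b"
    by (rule KER_reduce[OF _ _ G]) (auto simp: defs less11 less16)
  have 3: "KER y (\<lambda>i. shv 2 i + Lsh e0 i) = RP y (\<lambda>i. shv 2 i + Lsh e0 i) b * KER y b"
    by (rule KER_reduce[OF _ _ G]) (auto simp: defs less11 less16)
  have 4: "KER y (shv 2) = RP y (shv 2) b * KER y b"
    by (rule KER_reduce[OF _ _ G]) (auto simp: defs less11 less16)
  show ?thesis
    unfolding Hgen_addp 1 3 unfolding Hgen_def 2 4
    unfolding RP_def prod_lt11 prod_lt16 numA_def denA_def evf_def
    apply (simp add: defs numK_def denK_def pvC_def)
    by algebra
qed
lemma unit3:
  assumes "GoodP y"
  shows "Hgen 0 (addp y (stepv 3)) - Hgen 0 y = Hgen 3 (addp y e0) - Hgen 3 y"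
proof -
  define b where "b = (\<lambda>i. bl 3 ! i)"
  have bc: "\<And>i. 6 \<le> i \<Longrightarrow> i < 11 \<Longrightarrow> b i = 0" 
    by (auto simp: b_def bl_def less11)
  have G: "\<And>i. i < 11 \<Longrightarrow> numA i y + of_int (b i) \<notin> \<int>\<^sub>\<le>\<^sub>0" by (rule GoodP_base[OF assms bc])
  note defs = b_def bl_def shv_def shl_def Lsh_def linn_def stepv_def e0_def numC_def denC_def sum_lt7
  have 1: "KER y (\<lambda>i. shv 0 i + Lsh (stepv 3) i) = RP y (\<lambda>i. shv 0 i + Lsh (stepv 3) i) b * KER y b"
    by (rule KER_reduce[OF _ _ G]) (auto simp: defs less11 less16)
  have 2: "KER y (shv 0) = RP y (shv 0) b * KER y b"
    by (rule KER_reduce[OF _ _ G]) (auto simp: defs less11 less16)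
  have 3: "KER y (\<lambda>i. shv 3 i + Lsh e0 i) = RP y (\<lambda>i. shv 3 i + Lsh e0 i) b * KER y b"
    by (rule KER_reduce[OF _ _ G]) (auto simp: defs less11 less16)
  have 4: "KER y (shv 3) = RP y (shv 3) b * KER y b"
    by (rule KER_reduce[OF _ _ G]) (auto simp: defs less11 less16)
  show ?thesis
    unfolding Hgen_addp 1 3 unfolding Hgen_def 2 4
    unfolding RP_def prod_lt11 prod_lt16 numA_def denA_def evf_def
    apply (simp add: defs numK_def denK_def pvC_def)
    by algebra
qed
lemma unit4:
  assumes "GoodP y"
  shows "Hgen 0 (addp y (stepv 4)) - Hgen 0 y = Hgen 4 (addp y e0) - Hgen 4 y"
proof -
  define b where "b = (\<lambda>i. bl 4 ! i)"
  have bc: "\<And>i. 6 \<le> i \<Longrightarrow> i < 11 \<Longrightarrow> b i = 0" 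
    by (auto simp: b_def bl_def less11)
  have G: "\<And>i. i < 11 \<Longrightarrow> numA i y + of_int (b i) \<notin> \<int>\<^sub>\<le>\<^sub>0" by (rule GoodP_base[OF assms bc])
  note defs = b_def bl_def shv_def shl_def Lsh_def linn_def stepv_def e0_def numC_def denC_def sum_lt7
  have 1: "KER y (\<lambda>i. shv 0 i + Lsh (stepv 4) i) = RP y (\<lambda>i. shv 0 i + Lsh (stepv 4) i) b * KER y b"
    by (rule KER_reduce[OF _ _ G]) (auto simp: defs less11 less16)
  have 2: "KER y (shv 0) = RP y (shv 0) b * KER y b"
    by (rule KER_reduce[OF _ _ G]) (auto simp: defs less11 less16)
  have 3: "KER y (\<lambda>i. shv 4 i + Lsh e0 i) = RP y (\<lambda>i. shv 4 i + Lsh e0 i) b * KER y b"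
    by (rule KER_reduce[OF _ _ G]) (auto simp: defs less11 less16)
  have 4: "KER y (shv 4) = RP y (shv 4) b * KER y b"
    by (rule KER_reduce[OF _ _ G]) (auto simp: defs less11 less16)
  show ?thesis
    unfolding Hgen_addp 1 3 unfolding Hgen_def 2 4
    unfolding RP_def prod_lt11 prod_lt16 numA_def denA_def evf_def
    apply (simp add: defs numK_def denK_def pvC_def)
    by algebra
qed
lemma unit5:
  assumes "GoodP y"
  shows "Hgen 0 (addp y (stepv 5)) - Hgen 0 y = Hgen 5 (addp y e0) - Hgen 5 y"
proof -
  define b where "b = (\<lambda>i. bl 5 ! i)"
  have bc: "\<And>i. 6 \<le> i \<Longrightarrow> i < 11 \<Longrightarrow> b i = 0" 
    by (auto simp: b_def bl_def less11)
  have G: "\<And>i. i < 11 \<Longrightarrow> numA i y + of_int (b i) \<notin> \<int>\<^sub>\<le>\<^sub>0" by (rule GoodP_base[OF assms bc])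
  note defs = b_def bl_def shv_def shl_def Lsh_def linn_def stepv_def e0_def numC_def denC_def sum_lt7
  have 1: "KER y (\<lambda>i. shv 0 i + Lsh (stepv 5) i) = RP y (\<lambda>i. shv 0 i + Lsh (stepv 5) i) b * KER y b"
    by (rule KER_reduce[OF _ _ G]) (auto simp: defs less11 less16)
  have 2: "KER y (shv 0) = RP y (shv 0) b * KER y b"
    by (rule KER_reduce[OF _ _ G]) (auto simp: defs less11 less16)
  have 3: "KER y (\<lambda>i. shv 5 i + Lsh e0 i) = RP y (\<lambda>i. shv 5 i + Lsh e0 i) b * KER y b"
    by (rule KER_reduce[OF _ _ G]) (auto simp: defs less11 less16)
  have 4: "KER y (shv 5) = RP y (shv 5) b * KER y b"
    by (rule KER_reduce[OF _ _ G]) (auto simp: defs less11 less16)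
  show ?thesis
    unfolding Hgen_addp 1 3 unfolding Hgen_def 2 4
    unfolding RP_def prod_lt11 prod_lt16 numA_def denA_def evf_def
    apply (simp add: defs numK_def denK_def pvC_def)
    by algebra
qed




definition Phi :: "(nat \<Rightarrow> complex) \<Rightarrow> complex" where
  "Phi y = F0 (y 0) (y 1) (y 2) (y 3) (y 4) (y 5) (y 6)"

lemma Phi_eq: "Phi y = Hgen 0 y"
  unfolding Phi_def F0_def Hgen_def KER_def prod_lt11 prod_lt16 numA_def denA_def evf_def sum_lt7
  by (simp add: numC_def numK_def denC_def denK_def shv_def shl_def pvC_def
      rGamma_inverse_Gamma divide_inverse inverse_mult_distrib algebra_simps)



lemma addp_addp: "addp (addp y a) b = addp y (\<lambda>j. a j + b j)"
  unfolding addp_def by (auto simp: algebra_simps)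

lemma addp_zero: "addp y (\<lambda>_. 0) = y"
  unfolding addp_def by simp

lemma numA_addp: "numA i (addp y q) = numA i y + of_int (linn (numC ! i) q)"
  unfolding numA_def by (rule evf_addp)

lemma nonpos_plus_nat:
  assumes "z \<notin> \<int>\<^sub>\<le>\<^sub>0" "t \<ge> 0" shows "z + of_int t \<notin> \<int>\<^sub>\<le>\<^sub>0"
proof
  assume "z + of_int t \<in> \<int>\<^sub>\<le>\<^sub>0"
  then obtain n where eq: "z + of_int t = - of_nat n" by (auto elim!: nonpos_Ints_cases')
  have "z = (z + of_int t) - of_int t" by simp
  also have "\<dots> = - of_nat n - of_int t" using eq by simp
  also have "\<dots> = - of_nat (n + nat t)" using assms(2) by simp
  finally have "z = - of_nat (n + nat t)" .
  then have "z \<in> \<int>\<^sub>\<le>\<^sub>0" by (simp only: minus_of_nat_in_nonpos_Ints)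
  then show False using assms(1) by blast
qed

lemma step_const_nonneg:
  assumes "v < 7" "6 \<le> i" "i < 11" shows "linn (numC ! i) (stepv v) \<ge> 0"
proof -
  have "v = 0 \<or> v = 1 \<or> v = 2 \<or> v = 3 \<or> v = 4 \<or> v = 5 \<or> v = 6" using assms(1) by presburger
  moreover have "i = 6 \<or> i = 7 \<or> i = 8 \<or> i = 9 \<or> i = 10" using assms(2,3) by presburger
  ultimately show ?thesis
    by (elim disjE) (simp_all add: linn_def sum_lt7 numC_def stepv_def)
qed

lemma GoodP_step:
  assumes "GoodP y" "v < 7" shows "GoodP (addp y (stepv v))"
  unfolding GoodP_def
proof (intro conjI allI impI)
  fix i :: nat and m :: int assume "i < 6"
  then have "numA i y + of_int (linn (numC ! i) (stepv v) + m) \<notin> \<int>\<^sub>\<le>\<^sub>0"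
    using assms(1) unfolding GoodP_def by blast
  then show "numA i (addp y (stepv v)) + of_int m \<notin> \<int>\<^sub>\<le>\<^sub>0"
    by (simp add: numA_addp add.assoc)
next
  fix i :: nat assume i: "6 \<le> i \<and> i < 11"
  then have "numA i y \<notin> \<int>\<^sub>\<le>\<^sub>0" using assms(1) unfolding GoodP_def by blast
  then show "numA i (addp y (stepv v)) \<notin> \<int>\<^sub>\<le>\<^sub>0"
    unfolding numA_addp using step_const_nonneg[OF assms(2)] i by (intro nonpos_plus_nat) auto
qed

lemma unit_all:
  assumes "GoodP y" "v < 7"
  shows "Hgen 0 (addp y (stepv v)) - Hgen 0 y = Hgen v (addp y e0) - Hgen v y"
proof -
  have "v = 0 \<or> v = 1 \<or> v = 2 \<or> v = 3 \<or> v = 4 \<or> v = 5 \<or> v = 6" using assms(2) by presburger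
  moreover have "stepv 0 = e0" by (auto simp: stepv_def e0_def)
  ultimately show ?thesis
    using unit1[OF assms(1)] unit2[OF assms(1)] unit3[OF assms(1)] unit4[OF assms(1)]
      unit5[OF assms(1)] unit6[OF assms(1)] by auto
qed

fun Mate :: "nat list \<Rightarrow> (nat \<Rightarrow> complex) \<Rightarrow> complex" where
  "Mate [] y = 0"
| "Mate (v # p) y = Hgen v y + Mate p (addp y (stepv v))"

fun psum :: "nat list \<Rightarrow> nat \<Rightarrow> int" where
  "psum [] = (\<lambda>_. 0)"
| "psum (v # p) = (\<lambda>j. stepv v j + psum p j)"

lemma Mate_WZ:
  assumes "set p \<subseteq> {..<7}" "GoodP y"
  shows "Hgen 0 (addp y (psum p)) - Hgen 0 y = Mate p (addp y e0) - Mate p y"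
  using assms
proof (induction p arbitrary: y)
  case Nil then show ?case by (simp add: addp_zero)
next
  case (Cons v p)
  have v: "v < 7" using Cons.prems by auto
  have IH: "Hgen 0 (addp (addp y (stepv v)) (psum p)) - Hgen 0 (addp y (stepv v)) =
      Mate p (addp (addp y (stepv v)) e0) - Mate p (addp y (stepv v))"
    using Cons.IH[of "addp y (stepv v)"] Cons.prems GoodP_step[OF Cons.prems(2) v] by auto
  have U: "Hgen 0 (addp y (stepv v)) - Hgen 0 y = Hgen v (addp y e0) - Hgen v y"
    by (rule unit_all[OF Cons.prems(2) v])
  have c: "addp (addp y (stepv v)) e0 = addp (addp y e0) (stepv v)"
    by (simp add: addp_addp add.commute)
  have d: "addp (addp y (stepv v)) (psum p) = addp y (psum (v # p))"
    by (simp add: addp_addp)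
  show ?case using IH U unfolding c d by (simp add: algebra_simps)
qed



definition FormOK :: "nat \<Rightarrow> (complex list \<Rightarrow> (nat \<Rightarrow> complex)) \<Rightarrow> bool" where
  "FormOK r Y \<longleftrightarrow> (\<forall>c c0. \<exists>cs cc. \<forall>x. length x = r \<longrightarrow> evf c c0 (Y x) = aff r cs cc x)"

lemma aff_plus: "aff r cs cc x + d = aff r cs (cc + d) x"
  unfolding aff_def by (simp add: add.assoc)

lemma hypok_evf_Gamma:
  assumes "FormOK r Y" "i < r" shows "hypok r i (\<lambda>x. Gamma (evf c c0 (Y x) + d))"
proof -
  obtain cs cc where e: "\<And>x. length x = r \<Longrightarrow> evf c c0 (Y x) = aff r cs cc x"
    using assms(1) unfolding FormOK_def by blast
  show ?thesis by (rule hypok_cong[OF hypok_Gamma_aff[OF assms(2), of cs "cc + d"]]) (simp add: e aff_plus)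
qed

lemma hypok_evf_rGamma:
  assumes "FormOK r Y" "i < r" shows "hypok r i (\<lambda>x. rGamma (evf c c0 (Y x) + d))"
proof -
  obtain cs cc where e: "\<And>x. length x = r \<Longrightarrow> evf c c0 (Y x) = aff r cs cc x"
    using assms(1) unfolding FormOK_def by blast
  show ?thesis by (rule hypok_cong[OF hypok_rGamma_aff[OF assms(2), of cs "cc + d"]]) (simp add: e aff_plus)
qed

lemma hypok_evf_neg1:
  assumes "FormOK r Y" "i < r" shows "hypok r i (\<lambda>x. neg_one_pow (evf c c0 (Y x)))"
proof -
  obtain cs cc where e: "\<And>x. length x = r \<Longrightarrow> evf c c0 (Y x) = aff r cs cc x"
    using assms(1) unfolding FormOK_def by blast
  show ?thesis by (rule hypok_cong[OF hypok_neg1_aff[OF assms(2), of cs cc]]) (simp add: e)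
qed

lemma mpoly_evf:
  assumes "FormOK r Y" shows "mpoly_fun r (\<lambda>x. evf c c0 (Y x))"
proof -
  obtain cs cc where e: "\<And>x. length x = r \<Longrightarrow> evf c c0 (Y x) = aff r cs cc x"
    using assms(1) unfolding FormOK_def by blast
  show ?thesis by (rule mpoly_cong[OF mpoly_aff[of r cs cc]]) (simp add: e)
qed

lemma y6_evf: "y 6 = evf [0,0,0,0,0,0,1] 0 y"
  unfolding evf_def sum_lt7 by simp

lemma hypok_Hgen:
  assumes "FormOK r Y" "i < r" shows "hypok r i (\<lambda>x. Hgen v (Y x))"
proof -
  have "hypok r i (\<lambda>x. neg_one_pow (evf [0,0,0,0,0,0,1] 0 (Y x)) * evf (pvC v) 0 (Y x) *
     ((\<Prod>a<11. Gamma (evf (numC ! a) (numK ! a) (Y x) + of_int (shv v a))) *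
      (\<Prod>a<16. rGamma (evf (denC ! a) (denK ! a) (Y x) + of_int (shv v (11 + a))))))"
    by (intro hypok_mult hypok_prod hypok_evf_neg1 hypok_evf_Gamma hypok_evf_rGamma
        hypok_mpoly mpoly_evf assms) auto
  then show ?thesis
    by (rule hypok_cong) (simp add: Hgen_def KER_def numA_def denA_def y6_evf[symmetric])
qed

lemma FormOK_id: "FormOK 7 (\<lambda>x j. x ! j)"
  unfolding FormOK_def
proof (intro allI)
  fix c :: "int list" and c0 :: int
  show "\<exists>cs cc. \<forall>x. length x = 7 \<longrightarrow> evf c c0 (\<lambda>j. x ! j) = aff 7 cs cc x"
    by (rule exI[of _ "\<lambda>j. c ! j"], rule exI[of _ "of_int c0"]) (simp add: evf_def aff_def)
qed

lemma hyp_F0_list: "hypergeometric_in 7 F0_list"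
  unfolding hypergeometric_in_hypok
proof (intro allI impI)
  fix i :: nat assume "i < 7"
  then have "hypok 7 i (\<lambda>x. Hgen 0 (\<lambda>j. x ! j))" by (intro hypok_Hgen FormOK_id)
  then show "hypok 7 i F0_list"
    by (rule hypok_cong) (simp add: F0_list_def Phi_eq[symmetric] Phi_def)
qed

lemma hyp2_from_hypok:
  assumes "\<And>n k. G n k = Gt [of_int n, of_int k]" "hypok 2 0 Gt" "hypok 2 1 Gt"
  shows "hypergeometric2 G"
proof -
  have e0: "[of_int n, of_int k][0 := [of_int n, of_int k] ! 0 + 1] = [of_int (n + 1), (of_int k :: complex)]" for n k :: int
    by simp
  have e1: "[of_int n, of_int k][1 := [of_int n, of_int k] ! 1 + 1] = [of_int n, (of_int (k + 1) :: complex)]" for n k :: int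
    by simp
  show ?thesis
    unfolding hypergeometric2_def
  proof (intro conjI)
    from assms(2) obtain P Q where PQ: "mpoly_fun 2 P" "mpoly_fun 2 Q" "\<exists>x. length x = 2 \<and> Q x \<noteq> 0"
      "\<forall>x. length x = 2 \<and> Gt x \<noteq> 0 \<and> Q x \<noteq> 0 \<longrightarrow> Gt (x[0 := x ! 0 + 1]) = P x / Q x * Gt x"
      unfolding hypok_def by blast
    show "\<exists>P Q. mpoly_fun 2 P \<and> mpoly_fun 2 Q \<and> (\<exists>x. length x = 2 \<and> Q x \<noteq> 0) \<and>
       (\<forall>n k. G n k \<noteq> 0 \<and> Q [of_int n, of_int k] \<noteq> 0 \<longrightarrow>
          G (n + 1) k = P [of_int n, of_int k] / Q [of_int n, of_int k] * G n k)"
    proof (rule exI[of _ P], rule exI[of _ Q], intro conjI PQ(1-3) allI impI)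
      fix n k :: int assume h: "G n k \<noteq> 0 \<and> Q [of_int n, of_int k] \<noteq> 0"
      have "Gt ([of_int n, of_int k][0 := [of_int n, of_int k] ! 0 + 1]) = P [of_int n, of_int k] / Q [of_int n, of_int k] * Gt [of_int n, of_int k]"
      proof -
        have "length [of_int n, of_int k :: complex] = 2 \<and> Gt [of_int n, of_int k] \<noteq> 0 \<and> Q [of_int n, of_int k] \<noteq> 0"
          using h assms(1) by simp
        then show ?thesis using PQ(4) by blast
      qed
      then show "G (n + 1) k = P [of_int n, of_int k] / Q [of_int n, of_int k] * G n k"
        unfolding e0 assms(1) .
    qed
  next
    from assms(3) obtain P Q where PQ: "mpoly_fun 2 P" "mpoly_fun 2 Q" "\<exists>x. length x = 2 \<and> Q x \<noteq> 0"
      "\<forall>x. length x = 2 \<and> Gt x \<noteq> 0 \<and> Q x \<noteq> 0 \<longrightarrow> Gt (x[1 := x ! 1 + 1]) = P x / Q x * Gt x"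
      unfolding hypok_def by blast
    show "\<exists>P Q. mpoly_fun 2 P \<and> mpoly_fun 2 Q \<and> (\<exists>x. length x = 2 \<and> Q x \<noteq> 0) \<and>
       (\<forall>n k. G n k \<noteq> 0 \<and> Q [of_int n, of_int k] \<noteq> 0 \<longrightarrow>
          G n (k + 1) = P [of_int n, of_int k] / Q [of_int n, of_int k] * G n k)"
    proof (rule exI[of _ P], rule exI[of _ Q], intro conjI PQ(1-3) allI impI)
      fix n k :: int assume h: "G n k \<noteq> 0 \<and> Q [of_int n, of_int k] \<noteq> 0"
      have "Gt ([of_int n, of_int k][1 := [of_int n, of_int k] ! 1 + 1]) = P [of_int n, of_int k] / Q [of_int n, of_int k] * Gt [of_int n, of_int k]"
      proof -
        have "length [of_int n, of_int k :: complex] = 2 \<and> Gt [of_int n, of_int k] \<noteq> 0 \<and> Q [of_int n, of_int k] \<noteq> 0"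
          using h assms(1) by simp
        then show ?thesis using PQ(4) by blast
      qed
      then show "G n (k + 1) = P [of_int n, of_int k] / Q [of_int n, of_int k] * G n k"
        unfolding e1 assms(1) .
    qed
  qed
qed




definition Dv :: "int \<Rightarrow> int list \<Rightarrow> nat \<Rightarrow> int" where
  "Dv K As j = (if j = 0 then K else if j < 7 then As ! (j - 1) else 0)"
definition bp :: "complex \<Rightarrow> complex list \<Rightarrow> nat \<Rightarrow> complex" where
  "bp k0 ps j = (if j = 0 then k0 else if j < 7 then ps ! (j - 1) else 0)"
definition ul :: "int \<Rightarrow> int list \<Rightarrow> complex \<Rightarrow> complex list \<Rightarrow> complex list \<Rightarrow> nat \<Rightarrow> complex" where
  "ul K As k0 ps x = (\<lambda>j. of_int (Dv K As j) * x ! 0 + (if j = 0 then x ! 1 else 0) + bp k0 ps j)"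

lemma evf_ul: "evf c c0 (ul K As k0 ps x) =
   of_int (linn c (Dv K As)) * x ! 0 + of_int (c ! 0) * x ! 1 + evf c c0 (bp k0 ps)"
  unfolding evf_def linn_def ul_def sum_lt7 by (simp add: algebra_simps)

lemma FormOK_ul: "FormOK 2 (ul K As k0 ps)"
  unfolding FormOK_def
proof (intro allI)
  fix c :: "int list" and c0 :: int
  show "\<exists>cs cc. \<forall>x. length x = 2 \<longrightarrow> evf c c0 (ul K As k0 ps x) = aff 2 cs cc x"
    by (rule exI[of _ "\<lambda>j. if j = 0 then linn c (Dv K As) else c ! 0"], rule exI[of _ "evf c c0 (bp k0 ps)"])
       (simp add: evf_ul aff_def numeral_2_eq_2 lessThan_Suc)
qed

lemma ul_n: "ul K As k0 ps [of_int (n + 1), of_int k] = addp (ul K As k0 ps [of_int n, of_int k]) (Dv K As)"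
  unfolding ul_def addp_def by (auto simp: algebra_simps)

lemma ul_k: "ul K As k0 ps [of_int n, of_int (k + 1)] = addp (ul K As k0 ps [of_int n, of_int k]) e0"
  unfolding ul_def addp_def e0_def by (auto simp: algebra_simps)

lemma seed_nth:
  assumes "length As = 6" "length ps = 6" "j < 7"
  shows "seed_point K As k0 ps n k ! j = ul K As k0 ps [of_int n, of_int k] j"
proof (cases j)
  case 0 then show ?thesis by (simp add: seed_point_def ul_def Dv_def bp_def algebra_simps)
next
  case (Suc j')
  then have "j' < 6" using assms(3) by simp
  then show ?thesis using assms Suc by (simp add: seed_point_def ul_def Dv_def bp_def algebra_simps)
qed

lemma F0_list_seed:
  assumes "length As = 6" "length ps = 6"
  shows "F0_list (seed_point K As k0 ps n k) = Hgen 0 (ul K As k0 ps [of_int n, of_int k])"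
  unfolding Phi_eq[symmetric] Phi_def F0_list_def using seed_nth[OF assms] by simp

lemma numA_args:
  assumes "i < 11"
  shows "numA i y = F0_num_args (y 0) (y 1) (y 2) (y 3) (y 4) (y 5) (y 6) ! i"
  using assms unfolding less11
  by (elim disjE) (simp_all add: numA_def evf_def sum_lt7 numC_def numK_def F0_num_args_def algebra_simps)

lemma reg_numA:
  assumes "length As = 6" "length ps = 6" "F0_regular (seed_point K As k0 ps n k)" "i < 11"
  shows "numA i (ul K As k0 ps [of_int n, of_int k]) \<notin> \<int>\<^sub>\<le>\<^sub>0"
proof -
  let ?x = "seed_point K As k0 ps n k"
  have "numA i (ul K As k0 ps [of_int n, of_int k]) = F0_num_args (?x!0) (?x!1) (?x!2) (?x!3) (?x!4) (?x!5) (?x!6) ! i"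
    unfolding numA_args[OF assms(4)] using seed_nth[OF assms(1,2)] by simp
  moreover have "F0_num_args (?x!0) (?x!1) (?x!2) (?x!3) (?x!4) (?x!5) (?x!6) ! i \<in> set (F0_num_args (?x!0) (?x!1) (?x!2) (?x!3) (?x!4) (?x!5) (?x!6))"
    using assms(4) by (intro nth_mem) (simp add: F0_num_args_def)
  ultimately show ?thesis using assms(3) unfolding F0_regular_def by auto
qed

lemma numC_k: "i < 6 \<Longrightarrow> numC ! i ! 0 = 1"
  by (auto simp: numC_def less_Suc_eq numeral_eq_Suc)

lemma reg_GoodP:
  assumes "length As = 6" "length ps = 6" "\<And>n k. F0_regular (seed_point K As k0 ps n k)"
  shows "GoodP (ul K As k0 ps [of_int n, of_int k])"
  unfolding GoodP_def
proof (intro conjI allI impI)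
  fix i :: nat and m :: int assume i: "i < 6"
  have "numA i (ul K As k0 ps [of_int n, of_int (k + m)]) \<notin> \<int>\<^sub>\<le>\<^sub>0"
    by (rule reg_numA[OF assms(1,2,3)]) (use i in simp)
  moreover have "numA i (ul K As k0 ps [of_int n, of_int (k + m)]) = numA i (ul K As k0 ps [of_int n, of_int k]) + of_int m"
    unfolding numA_def evf_ul using numC_k[OF i] by (simp add: algebra_simps)
  ultimately show "numA i (ul K As k0 ps [of_int n, of_int k]) + of_int m \<notin> \<int>\<^sub>\<le>\<^sub>0" by simp
next
  fix i :: nat assume "6 \<le> i \<and> i < 11"
  then show "numA i (ul K As k0 ps [of_int n, of_int k]) \<notin> \<int>\<^sub>\<le>\<^sub>0"
    using reg_numA[OF assms(1,2,3)] by simp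
qed



lemma nonpole_shift:
  fixes \<alpha> \<beta> :: int and \<gamma> :: complex
  assumes ab: "\<alpha> \<noteq> 0 \<or> \<beta> \<noteq> 0"
    and reg: "\<And>n k::int. of_int \<alpha> * of_int n + of_int \<beta> * of_int k + \<gamma> \<notin> \<int>\<^sub>\<le>\<^sub>0"
  shows "of_int \<alpha> * of_int n + of_int \<beta> * of_int k + \<gamma> + of_int m \<notin> \<int>\<^sub>\<le>\<^sub>0"
proof
  assume "of_int \<alpha> * of_int n + of_int \<beta> * of_int k + \<gamma> + of_int m \<in> \<int>\<^sub>\<le>\<^sub>0"
  then obtain t where t: "of_int \<alpha> * of_int n + of_int \<beta> * of_int k + \<gamma> + of_int m = - of_nat t"
    by (auto elim!: nonpos_Ints_cases')
  define g where "g = - int t - m - \<alpha> * n - \<beta> * k"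
  have \<gamma>: "\<gamma> = of_int g"
  proof -
    have "\<gamma> = - of_nat t - of_int m - of_int \<alpha> * of_int n - of_int \<beta> * of_int k"
      using t by (simp add: algebra_simps eq_neg_iff_add_eq_0)
    then show ?thesis unfolding g_def by simp
  qed
  define M where "M = \<bar>g\<bar> + 1"
  have s0: "\<alpha> * \<alpha> + \<beta> * \<beta> \<noteq> 0" using ab by (simp add: sum_squares_eq_zero_iff)
  have s1: "\<alpha> * \<alpha> + \<beta> * \<beta> \<ge> 1" using s0 by (smt (verit) zero_le_square)
  have "M * (\<alpha> * \<alpha> + \<beta> * \<beta>) \<ge> M * 1" by (rule mult_left_mono[OF s1]) (simp add: M_def)
  then have le: "g - (\<alpha> * \<alpha> + \<beta> * \<beta>) * M \<le> 0" unfolding M_def by (simp add: algebra_simps)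
  have "of_int \<alpha> * of_int (- \<alpha> * M) + of_int \<beta> * of_int (- \<beta> * M) + \<gamma> = (of_int (g - (\<alpha> * \<alpha> + \<beta> * \<beta>) * M) :: complex)"
    unfolding \<gamma> by (simp add: algebra_simps)
  also have "\<dots> \<in> \<int>\<^sub>\<le>\<^sub>0" using le by (rule nonpos_Ints_of_int)
  finally show False using reg by blast
qed

context
  fixes K :: int and As :: "int list" and k0 :: complex and ps :: "complex list"
begin

definition nc :: "nat \<Rightarrow> bool" where
  "nc i \<longleftrightarrow> linn (numC ! i) (Dv K As) \<noteq> 0 \<or> numC ! i ! 0 \<noteq> 0"

definition BK :: "nat \<Rightarrow> complex list \<Rightarrow> complex" where
  "BK N x = (\<Prod>i<11. if nc i then Gamma (numA i (ul K As k0 ps x) - of_nat N) else 1) *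
            (\<Prod>j<16. rGamma (denA j (ul K As k0 ps x) + of_nat N))"

definition PK :: "nat \<Rightarrow> (nat \<Rightarrow> int) \<Rightarrow> complex list \<Rightarrow> complex" where
  "PK N s x = (\<Prod>i<11. if nc i then pochhammer (numA i (ul K As k0 ps x) - of_nat N) (nat (s i + int N))
                        else Gamma (numA i (ul K As k0 ps x) + of_int (s i))) *
            (\<Prod>j<16. pochhammer (denA j (ul K As k0 ps x) + of_int (s (11 + j))) (nat (int N - s (11 + j))))"

definition BaseL :: "nat \<Rightarrow> complex list \<Rightarrow> complex" where
  "BaseL N x = neg_one_pow (ul K As k0 ps x 6) * BK N x"

definition Rep :: "nat \<Rightarrow> (int \<Rightarrow> int \<Rightarrow> complex) \<Rightarrow> bool" where
  "Rep N H \<longleftrightarrow> (\<exists>P. mpoly_fun 2 P \<and> (\<forall>n k. H n k = P [of_int n, of_int k] * BaseL N [of_int n, of_int k]))"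

lemma numA_ul: "numA i (ul K As k0 ps x) =
   of_int (linn (numC ! i) (Dv K As)) * x ! 0 + of_int (numC ! i ! 0) * x ! 1 + numA i (bp k0 ps)"
  unfolding numA_def by (rule evf_ul)

lemma KER_line:
  assumes reg: "\<And>n k i. i < 11 \<Longrightarrow> numA i (ul K As k0 ps [of_int n, of_int k]) \<notin> \<int>\<^sub>\<le>\<^sub>0"
    and bd: "\<And>i. i < 27 \<Longrightarrow> \<bar>s i\<bar> \<le> int N"
  shows "KER (ul K As k0 ps [of_int n, of_int k]) s = PK N s [of_int n, of_int k] * BK N [of_int n, of_int k]"
proof -
  let ?y = "ul K As k0 ps [of_int n, of_int k]"
  have A: "Gamma (numA i ?y + of_int (s i)) =
      (if nc i then pochhammer (numA i ?y - of_nat N) (nat (s i + int N)) else Gamma (numA i ?y + of_int (s i))) *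
      (if nc i then Gamma (numA i ?y - of_nat N) else 1)" if i: "i < 11" for i
  proof (cases "nc i")
    case True
    define \<alpha> where "\<alpha> = linn (numC ! i) (Dv K As)"
    define \<beta> where "\<beta> = numC ! i ! 0"
    define \<gamma> where "\<gamma> = numA i (bp k0 ps)"
    have eqy: "numA i (ul K As k0 ps [of_int n', of_int k']) = of_int \<alpha> * of_int n' + of_int \<beta> * of_int k' + \<gamma>" for n' k'
      by (simp add: numA_ul \<alpha>_def \<beta>_def \<gamma>_def)
    have "of_int \<alpha> * of_int n + of_int \<beta> * of_int k + \<gamma> + of_int (- int N) \<notin> \<int>\<^sub>\<le>\<^sub>0"
    proof (rule nonpole_shift)
      show "\<alpha> \<noteq> 0 \<or> \<beta> \<noteq> 0" using True by (simp add: nc_def \<alpha>_def \<beta>_def)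
      fix n' k' :: int
      show "of_int \<alpha> * of_int n' + of_int \<beta> * of_int k' + \<gamma> \<notin> \<int>\<^sub>\<le>\<^sub>0"
        using reg[OF i, of n' k'] unfolding eqy .
    qed
    then have nz: "numA i ?y + of_int (- int N) \<notin> \<int>\<^sub>\<le>\<^sub>0" unfolding eqy .
    have e: "numA i ?y + of_int (s i) = (numA i ?y - of_nat N) + of_nat (nat (s i + int N))"
      using bd[of i] i by simp
    show ?thesis using True Gamma_shift_up[of "numA i ?y - of_nat N" "nat (s i + int N)"] nz
      unfolding e by simp
  qed simp
  have B: "rGamma (denA j ?y + of_int (s (11 + j))) =
      pochhammer (denA j ?y + of_int (s (11 + j))) (nat (int N - s (11 + j))) * rGamma (denA j ?y + of_nat N)"
    if j: "j < 16" for j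
  proof -
    have e: "denA j ?y + of_nat N = (denA j ?y + of_int (s (11 + j))) + of_nat (nat (int N - s (11 + j)))"
      using bd[of "11 + j"] j by simp
    show ?thesis unfolding e by (rule rGamma_shift_up)
  qed
  have A': "(\<Prod>i<11. Gamma (numA i ?y + of_int (s i))) =
     (\<Prod>i<11. if nc i then pochhammer (numA i ?y - of_nat N) (nat (s i + int N)) else Gamma (numA i ?y + of_int (s i))) *
     (\<Prod>i<11. if nc i then Gamma (numA i ?y - of_nat N) else 1)"
    unfolding prod.distrib[symmetric] by (rule prod.cong) (simp_all add: A)
  have B': "(\<Prod>j<16. rGamma (denA j ?y + of_int (s (11 + j)))) =
     (\<Prod>j<16. pochhammer (denA j ?y + of_int (s (11 + j))) (nat (int N - s (11 + j)))) *
     (\<Prod>j<16. rGamma (denA j ?y + of_nat N))"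
    unfolding prod.distrib[symmetric] by (rule prod.cong) (simp_all add: B)
  show ?thesis unfolding KER_def PK_def BK_def A' B' by (simp add: mult_ac)
qed

lemma mpoly_PK: "mpoly_fun 2 (PK N s)"
proof -
  have 1: "mpoly_fun 2 (\<lambda>x. if nc i then pochhammer (numA i (ul K As k0 ps x) - of_nat N) (nat (s i + int N))
                        else Gamma (numA i (ul K As k0 ps x) + of_int (s i)))" for i
  proof (cases "nc i")
    case True
    then show ?thesis unfolding numA_def
      by (simp add: mpoly_poch mpoly_diff mpoly_evf[OF FormOK_ul] mpoly_const)
  next
    case False
    then have "numA i (ul K As k0 ps x) = numA i (bp k0 ps)" for x
      by (simp add: numA_ul nc_def)
    then show ?thesis using False by (simp add: mpoly_const)
  qed
  have 2: "mpoly_fun 2 (\<lambda>x. pochhammer (denA j (ul K As k0 ps x) + of_int (s (11 + j))) (nat (int N - s (11 + j))))" for j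
    unfolding denA_def by (intro mpoly_poch mpoly_add mpoly_evf[OF FormOK_ul] mpoly_const)
  show ?thesis unfolding PK_def
    by (intro mpoly_mult mpoly_prod 1 2) auto
qed

lemma hypok_BaseL:
  assumes "i < 2" shows "hypok 2 i (BaseL N)"
proof -
  have 1: "hypok 2 i (\<lambda>x. if nc a then Gamma (numA a (ul K As k0 ps x) - of_nat N) else 1)" for a
  proof (cases "nc a")
    case True
    have "hypok 2 i (\<lambda>x. Gamma (evf (numC ! a) (numK ! a) (ul K As k0 ps x) + (- of_nat N)))"
      by (rule hypok_evf_Gamma[OF FormOK_ul assms])
    then show ?thesis using True by (simp add: numA_def)
  qed (simp add: hypok_const)
  have 2: "hypok 2 i (\<lambda>x. rGamma (denA j (ul K As k0 ps x) + of_nat N))" for j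
    unfolding denA_def by (rule hypok_evf_rGamma[OF FormOK_ul assms])
  have 3: "hypok 2 i (\<lambda>x. neg_one_pow (ul K As k0 ps x 6))"
    by (subst y6_evf) (rule hypok_evf_neg1[OF FormOK_ul assms])
  show ?thesis unfolding BaseL_def BK_def
    by (intro hypok_mult hypok_prod 1 2 3) auto
qed

lemma shl_set: "set (shl v) \<subseteq> {-1, 0, 1}"
  by (simp add: shl_def)

lemma shv_bound: "i < 27 \<Longrightarrow> \<bar>shv v i\<bar> \<le> 1"
proof -
  assume "i < 27"
  then have "shl v ! i \<in> set (shl v)" by (intro nth_mem) (simp add: shl_def)
  then show ?thesis using shl_set[of v] unfolding shv_def by auto
qed

lemma linn_bound:
  assumes "\<And>j. j < 7 \<Longrightarrow> \<bar>q j\<bar> \<le> M" "(\<Sum>j<7. \<bar>c ! j\<bar>) \<le> 9"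
  shows "\<bar>linn c q\<bar> \<le> 9 * M"
proof -
  have M0: "M \<ge> 0" using assms(1)[of 0] by simp
  have "\<bar>linn c q\<bar> \<le> (\<Sum>j<7. \<bar>c ! j * q j\<bar>)" unfolding linn_def by (rule sum_abs)
  also have "\<dots> \<le> (\<Sum>j<7. \<bar>c ! j\<bar> * M)"
    by (rule sum_mono) (simp add: abs_mult assms(1) mult_left_mono)
  also have "\<dots> = (\<Sum>j<7. \<bar>c ! j\<bar>) * M" by (simp add: sum_distrib_right)
  also have "\<dots> \<le> 9 * M" by (rule mult_right_mono[OF assms(2) M0])
  finally show ?thesis .
qed

lemma numC_abs: "c \<in> set numC \<Longrightarrow> (\<Sum>j<7. \<bar>c ! j\<bar>) \<le> 9"
  by (auto simp: numC_def sum_lt7)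
lemma denC_abs: "c \<in> set denC \<Longrightarrow> (\<Sum>j<7. \<bar>c ! j\<bar>) \<le> (9::int)"
  by (auto simp: denC_def sum_lt7)

lemma Lsh_bound:
  assumes "\<And>j. j < 7 \<Longrightarrow> \<bar>q j\<bar> \<le> M" "i < 27"
  shows "\<bar>Lsh q i\<bar> \<le> 9 * M"
proof (cases "i < 11")
  case True
  then have "numC ! i \<in> set numC" by (intro nth_mem) (simp add: numC_def)
  then show ?thesis using True by (simp add: Lsh_def linn_bound[OF assms(1) numC_abs])
next
  case False
  then have "denC ! (i - 11) \<in> set denC" using assms(2) by (intro nth_mem) (simp add: denC_def)
  then show ?thesis using False by (simp add: Lsh_def linn_bound[OF assms(1) denC_abs])
qed

lemma Rep_Hgen:
  assumes reg: "\<And>n k i. i < 11 \<Longrightarrow> numA i (ul K As k0 ps [of_int n, of_int k]) \<notin> \<int>\<^sub>\<le>\<^sub>0"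
    and v: "v < 7" and qb: "\<And>j. j < 7 \<Longrightarrow> \<bar>q j\<bar> \<le> M" and N: "9 * M + 1 \<le> int N"
  shows "Rep N (\<lambda>n k. Hgen v (addp (ul K As k0 ps [of_int n, of_int k]) q))"
proof -
  define s where "s = (\<lambda>i. shv v i + Lsh q i)"
  have bd: "\<bar>s i\<bar> \<le> int N" if "i < 27" for i
    using shv_bound[OF that, of v] Lsh_bound[of q M i, OF qb that] N unfolding s_def by linarith
  define P where "P = (\<lambda>x. (if even (q 6) then 1 else -1) *
      (evf (pvC v) 0 (ul K As k0 ps x) + of_int (linn (pvC v) q)) * PK N s x)"
  have "mpoly_fun 2 P" unfolding P_def
    by (intro mpoly_mult mpoly_const mpoly_add mpoly_evf[OF FormOK_ul] mpoly_PK)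
  moreover have "Hgen v (addp (ul K As k0 ps [of_int n, of_int k]) q) =
      P [of_int n, of_int k] * BaseL N [of_int n, of_int k]" for n k
  proof -
    have KL: "KER (ul K As k0 ps [of_int n, of_int k]) s = PK N s [of_int n, of_int k] * BK N [of_int n, of_int k]"
      by (rule KER_line[OF reg bd])
    show ?thesis unfolding Hgen_addp P_def BaseL_def KL[unfolded s_def] s_def by (simp add: mult_ac)
  qed
  ultimately show ?thesis unfolding Rep_def by blast
qed

lemma Rep_add: "Rep N F \<Longrightarrow> Rep N G \<Longrightarrow> Rep N (\<lambda>n k. F n k + G n k)"
  unfolding Rep_def by (metis (no_types, lifting) mpoly_add distrib_right)

lemma Rep_diff: "Rep N F \<Longrightarrow> Rep N G \<Longrightarrow> Rep N (\<lambda>n k. F n k - G n k)"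
  unfolding Rep_def by (metis (no_types, lifting) mpoly_diff left_diff_distrib)

lemma Rep_zero: "Rep N (\<lambda>n k. 0)"
  unfolding Rep_def by (rule exI[of _ "\<lambda>_. 0"]) (simp add: mpoly_const)

lemma stepv_abs: "\<bar>stepv v j\<bar> \<le> 1"
  by (simp add: stepv_def)

lemma Rep_Mate:
  assumes reg: "\<And>n k i. i < 11 \<Longrightarrow> numA i (ul K As k0 ps [of_int n, of_int k]) \<notin> \<int>\<^sub>\<le>\<^sub>0"
    and N: "9 * M + 1 \<le> int N"
  shows "set p \<subseteq> {..<7} \<Longrightarrow> (\<And>j. j < 7 \<Longrightarrow> \<bar>q j\<bar> + int (length p) \<le> M) \<Longrightarrow>
    Rep N (\<lambda>n k. Mate p (addp (ul K As k0 ps [of_int n, of_int k]) q))"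
proof (induction p arbitrary: q)
  case Nil then show ?case by (simp add: Rep_zero)
next
  case (Cons v p)
  have v: "v < 7" using Cons.prems by auto
  have 1: "Rep N (\<lambda>n k. Hgen v (addp (ul K As k0 ps [of_int n, of_int k]) q))"
  proof (rule Rep_Hgen[OF reg v _ N])
    fix j :: nat assume "j < 7"
    then have "\<bar>q j\<bar> + int (length (v # p)) \<le> M" by (rule Cons.prems(2))
    then show "\<bar>q j\<bar> \<le> M" by simp
  qed
  have 2: "Rep N (\<lambda>n k. Mate p (addp (ul K As k0 ps [of_int n, of_int k]) (\<lambda>j. q j + stepv v j)))"
  proof (rule Cons.IH)
    show "set p \<subseteq> {..<7}" using Cons.prems by auto
    fix j :: nat assume "j < 7"
    then show "\<bar>q j + stepv v j\<bar> + int (length p) \<le> M"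
      using Cons.prems(2)[of j] stepv_abs[of v j] by simp
  qed
  show ?case using Rep_add[OF 1 2] by (simp add: addp_addp)
qed

end



definition cvec :: "int \<Rightarrow> int list \<Rightarrow> nat \<Rightarrow> int" where
  "cvec K As v = [K, As ! 0, As ! 1, As ! 2 - As ! 5, As ! 3 - As ! 5, As ! 4 - As ! 5, As ! 5] ! v"

definition pathX :: "(nat \<Rightarrow> nat) \<Rightarrow> nat list" where
  "pathX f = concat (map (\<lambda>v. replicate (f v) v) [0,1,2,3,4,5,6])"

lemma psum_append: "psum (xs @ ys) j = psum xs j + psum ys j"
  by (induction xs) auto

lemma psum_replicate: "psum (replicate m v) j = int m * stepv v j"
  by (induction m) (auto simp: algebra_simps)

lemma psum_concat: "psum (concat (map (\<lambda>v. replicate (f v) v) vs)) j = sum_list (map (\<lambda>v. int (f v) * stepv v j) vs)"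
  by (induction vs) (auto simp: psum_append psum_replicate)

lemma pathX_set: "set (pathX f) \<subseteq> {..<7}"
  by (auto simp: pathX_def split: if_splits)

lemma path_diff:
  "psum (pathX (\<lambda>v. nat (cvec K As v))) j = Dv K As j + psum (pathX (\<lambda>v. nat (- cvec K As v))) j"
proof -
  have "j = 0 \<or> j = 1 \<or> j = 2 \<or> j = 3 \<or> j = 4 \<or> j = 5 \<or> j = 6 \<or> j \<ge> 7" by presburger
  then show ?thesis
    unfolding pathX_def psum_concat
    by (elim disjE) (auto simp: stepv_def Dv_def cvec_def algebra_simps)
qed

lemma Mate_line_WZ:
  assumes g1: "GoodP u" and g2: "GoodP w" and w: "w = addp u D"
    and d: "\<And>j. psum P j = D j + psum Mm j" and P: "set P \<subseteq> {..<7}" and Mm: "set Mm \<subseteq> {..<7}"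
  shows "Hgen 0 w - Hgen 0 u = (Mate P (addp u e0) - Mate Mm (addp w e0)) - (Mate P u - Mate Mm w)"
proof -
  have 1: "Hgen 0 (addp u (psum P)) - Hgen 0 u = Mate P (addp u e0) - Mate P u" by (rule Mate_WZ[OF P g1])
  have 2: "Hgen 0 (addp w (psum Mm)) - Hgen 0 w = Mate Mm (addp w e0) - Mate Mm w" by (rule Mate_WZ[OF Mm g2])
  have 3: "addp w (psum Mm) = addp u (psum P)" unfolding w addp_addp d by simp
  show ?thesis using 1 2 unfolding 3 by algebra
qed

theorem theorem1:
  shows "WZ_seed 6 F0_regular F0_list"
  unfolding WZ_seed_def
proof (intro conjI allI impI)
  show "hypergeometric_in (Suc 6) F0_list" using hyp_F0_list by (simp add: numeral_eq_Suc)
  fix K :: int and As :: "int list" and k0 :: complex and ps :: "complex list"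
  assume H: "length As = 6 \<and> length ps = 6 \<and> (\<forall>n k. F0_regular (seed_point K As k0 ps n k))"
  then have lA: "length As = 6" and lp: "length ps = 6" and R: "\<And>n k. F0_regular (seed_point K As k0 ps n k)"
    by auto
  define U where "U n k = ul K As k0 ps [of_int n, of_int k]" for n k :: int
  define PP where "PP = pathX (\<lambda>v. nat (cvec K As v))"
  define MM where "MM = pathX (\<lambda>v. nat (- cvec K As v))"
  define G where "G n k = Mate PP (U n k) - Mate MM (U (n + 1) k)" for n k
  have reg: "\<And>n k i. i < 11 \<Longrightarrow> numA i (ul K As k0 ps [of_int n, of_int k]) \<notin> \<int>\<^sub>\<le>\<^sub>0"
    using reg_numA[OF lA lp R] by blast
  have good: "GoodP (U n k)" for n k unfolding U_def by (rule reg_GoodP[OF lA lp R])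
  have Fe: "F0_list (seed_point K As k0 ps n k) = Hgen 0 (U n k)" for n k
    unfolding U_def by (rule F0_list_seed[OF lA lp])
  have Un: "U (n + 1) k = addp (U n k) (Dv K As)" for n k unfolding U_def by (rule ul_n)
  have Uk: "U n (k + 1) = addp (U n k) e0" for n k unfolding U_def by (rule ul_k)
  have WZ: "F0_list (seed_point K As k0 ps (n + 1) k) - F0_list (seed_point K As k0 ps n k) = G n (k + 1) - G n k" for n k
  proof -
    have "Hgen 0 (U (n + 1) k) - Hgen 0 (U n k) =
       (Mate PP (addp (U n k) e0) - Mate MM (addp (U (n + 1) k) e0)) - (Mate PP (U n k) - Mate MM (U (n + 1) k))"
      by (rule Mate_line_WZ[OF good good Un]) (auto simp: PP_def MM_def path_diff pathX_set)
    then show ?thesis unfolding Fe G_def Uk Un[of n "k + 1"] Uk[of "n + 1"] by (simp add: Un)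
  qed
  have hF: "hypergeometric2 (\<lambda>n k. F0_list (seed_point K As k0 ps n k))"
    by (rule hyp2_from_hypok[where Gt = "\<lambda>x. Hgen 0 (ul K As k0 ps x)"])
       (simp_all add: Fe U_def hypok_Hgen[OF FormOK_ul])
  define M :: int where "M = int (length PP) + int (length MM) + (\<Sum>j<7. \<bar>Dv K As j\<bar>)"
  define N where "N = nat (9 * M + 1)"
  have M0: "0 \<le> (\<Sum>j<7. \<bar>Dv K As j\<bar>)" by (rule sum_nonneg) simp
  have N: "9 * M + 1 \<le> int N" unfolding N_def by simp
  have r1: "Rep K As k0 ps N (\<lambda>n k. Mate PP (addp (ul K As k0 ps [of_int n, of_int k]) (\<lambda>_. 0)))"
    by (rule Rep_Mate[OF reg N]) (use M0 in \<open>auto simp: PP_def pathX_set M_def\<close>)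
  have r2: "Rep K As k0 ps N (\<lambda>n k. Mate MM (addp (ul K As k0 ps [of_int n, of_int k]) (Dv K As)))"
  proof (rule Rep_Mate[OF reg N])
    show "set MM \<subseteq> {..<7}" by (simp add: MM_def pathX_set)
    fix j :: nat assume "j < 7"
    then have "\<bar>Dv K As j\<bar> \<le> (\<Sum>j<7. \<bar>Dv K As j\<bar>)"
      by (intro member_le_sum) auto
    then show "\<bar>Dv K As j\<bar> + int (length MM) \<le> M" unfolding M_def by simp
  qed
  obtain P where P: "mpoly_fun 2 P"
    "\<And>n k. G n k = P [of_int n, of_int k] * BaseL K As k0 ps N [of_int n, of_int k]"
    using Rep_diff[OF r1 r2] unfolding Rep_def G_def U_def[symmetric] Un[symmetric] addp_zero by blast
  have hG: "hypergeometric2 G"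
    by (rule hyp2_from_hypok[where Gt = "\<lambda>x. P x * BaseL K As k0 ps N x"])
       (simp_all add: P(2) hypok_mult hypok_mpoly[OF P(1)] hypok_BaseL)
  show "\<exists>G. WZ_pair (\<lambda>n k. F0_list (seed_point K As k0 ps n k)) G"
    unfolding WZ_pair_def using hF hG WZ by blast
qed


end
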